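(* Let $\tilde\kappa>0$, $\kappa\ge1/\sqrt2$ and $\varepsilon>1$. Then the operator $$\frac{\kappa}{\tilde\kappa}+T_0+\frac1\kappa T_2^*\Big(\mathbb{1}-\frac1\kappa T_3\Big)^{-1}T_2$$ is boundedly invertible on $L^2(\mathbb{R})$.
   Context: All operators are evaluated at $\sigma=0$, $z=-\varepsilon$ and act on $L^2(\mathbb{R})$, described in Fourier space (unitary Fourier transform): $T_0$ is multiplication by $(s^2+2\varepsilon)^{-1/2}$, $T_3$ is multiplication by $(s^2+4\varepsilon)^{-1/2}$, $T_2$ is the integral operator in Fourier space with kernel $\hat T_2(s,t)=\frac1\pi(t^2+(s-t)^2+2\varepsilon)^{-1}$, and $T_2^*$ is its adjoint. $\mathbb{1}$ is the identity. *)

theory Defs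
  imports "HOL-Analysis.Analysis"
begin

text \<open>L^2(R) is realised in Fourier space (the unitary Fourier transform is an isometric
 isomorphism of L^2(R), so bounded invertibility is unaffected). Elements are represented
 by square-integrable Borel functions real \<Rightarrow> complex; equality is almost-everywhere equality.\<close>

definition L2 :: "(real \<Rightarrow> complex) set" where
  "L2 = {f. f \<in> borel_measurable lborel \<and> integrable lborel (\<lambda>s. (norm (f s))\<^sup>2)}"

definition L2norm :: "(real \<Rightarrow> complex) \<Rightarrow> real" where
  "L2norm f = sqrt (\<integral>s. (norm (f s))\<^sup>2 \<partial>lborel)"

definition mult_op :: "(real \<Rightarrow> real) \<Rightarrow> (real \<Rightarrow> complex) \<Rightarrow> (real \<Rightarrow> complex)" where
  "mult_op m f = (\<lambda>s. complex_of_real (m s) * f s)"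

definition int_op :: "(real \<Rightarrow> real \<Rightarrow> real) \<Rightarrow> (real \<Rightarrow> complex) \<Rightarrow> (real \<Rightarrow> complex)" where
  "int_op K f = (\<lambda>s. \<integral>t. complex_of_real (K s t) * f t \<partial>lborel)"

definition T0 :: "real \<Rightarrow> (real \<Rightarrow> complex) \<Rightarrow> (real \<Rightarrow> complex)" where
  "T0 \<epsilon> = mult_op (\<lambda>s. 1 / sqrt (s\<^sup>2 + 2 * \<epsilon>))"

definition T3_symbol :: "real \<Rightarrow> real \<Rightarrow> real" where
  "T3_symbol \<epsilon> s = 1 / sqrt (s\<^sup>2 + 4 * \<epsilon>)"

definition T3 :: "real \<Rightarrow> (real \<Rightarrow> complex) \<Rightarrow> (real \<Rightarrow> complex)" where
  "T3 \<epsilon> = mult_op (T3_symbol \<epsilon>)"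

definition T2_kernel :: "real \<Rightarrow> real \<Rightarrow> real \<Rightarrow> real" where
  "T2_kernel \<epsilon> s t = 1 / (pi * (t\<^sup>2 + (s - t)\<^sup>2 + 2 * \<epsilon>))"

definition T2 :: "real \<Rightarrow> (real \<Rightarrow> complex) \<Rightarrow> (real \<Rightarrow> complex)" where
  "T2 \<epsilon> = int_op (T2_kernel \<epsilon>)"

text \<open>Adjoint of T2: kernel conj(K(t,s)) = K(t,s), since K is real.\<close>
definition T2_adj :: "real \<Rightarrow> (real \<Rightarrow> complex) \<Rightarrow> (real \<Rightarrow> complex)" where
  "T2_adj \<epsilon> = int_op (\<lambda>s t. T2_kernel \<epsilon> t s)"

text \<open>(1 - T3/kappa)^{-1}: T3 is the multiplication operator with symbol T3_symbol, so its
 inverse (functional calculus) is multiplication by the reciprocal symbol.\<close>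
definition resolvent3 :: "real \<Rightarrow> real \<Rightarrow> (real \<Rightarrow> complex) \<Rightarrow> (real \<Rightarrow> complex)" where
  "resolvent3 \<kappa> \<epsilon> = mult_op (\<lambda>s. inverse (1 - T3_symbol \<epsilon> s / \<kappa>))"

definition op_A :: "real \<Rightarrow> real \<Rightarrow> real \<Rightarrow> (real \<Rightarrow> complex) \<Rightarrow> (real \<Rightarrow> complex)" where
  "op_A \<kappa>t \<kappa> \<epsilon> f = (\<lambda>s. complex_of_real (\<kappa> / \<kappa>t) * f s + T0 \<epsilon> f s
      + complex_of_real (1 / \<kappa>) * T2_adj \<epsilon> (resolvent3 \<kappa> \<epsilon> (T2 \<epsilon> f)) s)"

definition bounded_on_L2 :: "((real \<Rightarrow> complex) \<Rightarrow> (real \<Rightarrow> complex)) \<Rightarrow> bool" where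
  "bounded_on_L2 A \<longleftrightarrow> (\<forall>f\<in>L2. A f \<in> L2) \<and> (\<exists>C. \<forall>f\<in>L2. L2norm (A f) \<le> C * L2norm f)"

definition boundedly_invertible_L2 :: "((real \<Rightarrow> complex) \<Rightarrow> (real \<Rightarrow> complex)) \<Rightarrow> bool" where
  "boundedly_invertible_L2 A \<longleftrightarrow> bounded_on_L2 A \<and>
     (\<exists>B. bounded_on_L2 B \<and>
          (\<forall>f\<in>L2. AE s in lborel. A (B f) s = f s) \<and>
          (\<forall>f\<in>L2. AE s in lborel. B (A f) s = f s))"

end

theory Submission
  imports Defs "HOL-Probability.Sinc_Integral"
begin

lemma quad_disc:
  fixes X P Y :: real
  assumes h: "\<And>t. 0 \<le> X*t\<^sup>2 + 2*P*t + Y" and X: "0 \<le> X"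
  shows "P\<^sup>2 \<le> X*Y"
proof (cases "X = 0")
  case True
  show ?thesis
  proof (rule ccontr)
    assume "\<not> ?thesis"
    then have "P \<noteq> 0" using True by simp
    have "0 \<le> X*(-(Y+1)/(2*P))\<^sup>2 + 2*P*(-(Y+1)/(2*P)) + Y" by (rule h)
    then show False using True \<open>P \<noteq> 0\<close> by (simp add: field_simps)
  qed
next
  case False
  then have Xp: "X > 0" using X by simp
  have "0 \<le> X*(-P/X)\<^sup>2 + 2*P*(-P/X) + Y" by (rule h)
  also have "\<dots> = Y - P\<^sup>2/X" using Xp by (simp add: field_simps power2_eq_square)
  finally show ?thesis using Xp by (simp add: field_simps)
qed

lemma CS_real:
  fixes f g :: "real \<Rightarrow> real"
  assumes [measurable]: "f \<in> borel_measurable M" "g \<in> borel_measurable M"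
    and fi: "integrable M (\<lambda>x. (f x)\<^sup>2)" and gi: "integrable M (\<lambda>x. (g x)\<^sup>2)"
  shows "integrable M (\<lambda>x. f x * g x)"
    and "(\<integral>x. f x * g x \<partial>M)\<^sup>2 \<le> (\<integral>x. (f x)\<^sup>2 \<partial>M) * (\<integral>x. (g x)\<^sup>2 \<partial>M)"
proof -
  show fg: "integrable M (\<lambda>x. f x * g x)"
  proof (rule Bochner_Integration.integrable_bound[OF Bochner_Integration.integrable_add[OF fi gi]])
    show "(\<lambda>x. f x * g x) \<in> borel_measurable M" by measurable
    show "AE x in M. norm (f x * g x) \<le> norm ((f x)\<^sup>2 + (g x)\<^sup>2)"
    proof
      fix x
      have "2 * \<bar>f x * g x\<bar> \<le> (f x)\<^sup>2 + (g x)\<^sup>2"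
        using sum_squares_bound[of "\<bar>f x\<bar>" "\<bar>g x\<bar>"] by (simp add: abs_mult mult.assoc)
      then show "norm (f x * g x) \<le> norm ((f x)\<^sup>2 + (g x)\<^sup>2)" by simp
    qed
  qed
  have "0 \<le> (\<integral>x. (f x)\<^sup>2 \<partial>M) * t\<^sup>2 + 2 * (\<integral>x. f x * g x \<partial>M) * t + (\<integral>x. (g x)\<^sup>2 \<partial>M)" for t
  proof -
    have "(\<integral>x. (t * f x + g x)\<^sup>2 \<partial>M) = (\<integral>x. t\<^sup>2 * (f x)\<^sup>2 + (2*t) * (f x * g x) + (g x)\<^sup>2 \<partial>M)"
      by (rule Bochner_Integration.integral_cong) (auto simp: power2_eq_square algebra_simps)
    also have "\<dots> = t\<^sup>2 * (\<integral>x. (f x)\<^sup>2 \<partial>M) + (2*t) * (\<integral>x. f x * g x \<partial>M) + (\<integral>x. (g x)\<^sup>2 \<partial>M)"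
      using fi gi fg by simp
    finally have e: "(\<integral>x. (t * f x + g x)\<^sup>2 \<partial>M) = t\<^sup>2 * (\<integral>x. (f x)\<^sup>2 \<partial>M) + (2*t) * (\<integral>x. f x * g x \<partial>M) + (\<integral>x. (g x)\<^sup>2 \<partial>M)" .
    have nn: "0 \<le> (\<integral>x. (t * f x + g x)\<^sup>2 \<partial>M)" by (rule Bochner_Integration.integral_nonneg) simp
    show ?thesis using nn unfolding e by (simp add: algebra_simps)
  qed
  from quad_disc[OF this] show "(\<integral>x. f x * g x \<partial>M)\<^sup>2 \<le> (\<integral>x. (f x)\<^sup>2 \<partial>M) * (\<integral>x. (g x)\<^sup>2 \<partial>M)"
    by simp
qed


definition EE :: "(real \<Rightarrow> complex) \<Rightarrow> real" where
  "EE x = (\<integral>s. (cmod (x s))\<^sup>2 \<partial>lborel)"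

lemma EE_nonneg: "0 \<le> EE x"
  unfolding EE_def by (rule Bochner_Integration.integral_nonneg) simp

lemma L2_meas: "x \<in> L2 \<Longrightarrow> x \<in> borel_measurable lborel"
  by (simp add: L2_def)
lemma L2_int: "x \<in> L2 \<Longrightarrow> integrable lborel (\<lambda>s. (cmod (x s))\<^sup>2)"
  by (simp add: L2_def)
lemma L2I: "x \<in> borel_measurable lborel \<Longrightarrow> integrable lborel (\<lambda>s. (cmod (x s))\<^sup>2) \<Longrightarrow> x \<in> L2"
  by (simp add: L2_def)

lemma CS_cx:
  fixes g :: "real \<Rightarrow> real"
  assumes x: "x \<in> L2" and [measurable]: "g \<in> borel_measurable lborel"
    and gi: "integrable lborel (\<lambda>t. (g t)\<^sup>2)"
  shows "integrable lborel (\<lambda>t. \<bar>g t\<bar> * cmod (x t))"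
    and "integrable lborel (\<lambda>t. complex_of_real (g t) * x t)"
    and "(\<integral>t. \<bar>g t\<bar> * cmod (x t) \<partial>lborel)\<^sup>2 \<le> (\<integral>t. (g t)\<^sup>2 \<partial>lborel) * EE x"
proof -
  have [measurable]: "x \<in> borel_measurable lborel" using x by (simp add: L2_def)
  have g2: "integrable lborel (\<lambda>t. \<bar>g t\<bar>\<^sup>2)" using gi by simp
  have x2: "integrable lborel (\<lambda>t. (cmod (x t))\<^sup>2)" using x by (simp add: L2_def)
  note cs = CS_real[of "\<lambda>t. \<bar>g t\<bar>" lborel "\<lambda>t. cmod (x t)", OF _ _ g2 x2]
  show i1: "integrable lborel (\<lambda>t. \<bar>g t\<bar> * cmod (x t))" by (rule cs(1)) measurable
  show "(\<integral>t. \<bar>g t\<bar> * cmod (x t) \<partial>lborel)\<^sup>2 \<le> (\<integral>t. (g t)\<^sup>2 \<partial>lborel) * EE x"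
    using cs(2) by (simp add: EE_def)
  show "integrable lborel (\<lambda>t. complex_of_real (g t) * x t)"
    by (rule Bochner_Integration.integrable_bound[OF i1]) (auto simp: norm_mult)
qed

locale kern =
  fixes k :: "real \<Rightarrow> real \<Rightarrow> real" and a b :: "real \<Rightarrow> real" and Bb :: real
  assumes k_meas[measurable]: "(\<lambda>(s,t). k s t) \<in> borel_measurable (lborel \<Otimes>\<^sub>M lborel)"
    and k_bound: "\<And>s t. (k s t)\<^sup>2 \<le> a t * b s"
    and a_nn: "\<And>t. 0 \<le> a t" and b_nn: "\<And>s. 0 \<le> b s" and b_le: "\<And>s. b s \<le> Bb"
    and a_int: "integrable lborel a" and b_int: "integrable lborel b"
begin

definition "IA = integral\<^sup>L lborel a"
definition "IB = integral\<^sup>L lborel b"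

lemma IA_nn: "0 \<le> IA" unfolding IA_def by (rule Bochner_Integration.integral_nonneg) (simp add: a_nn)
lemma IB_nn: "0 \<le> IB" unfolding IB_def by (rule Bochner_Integration.integral_nonneg) (simp add: b_nn)

lemma k_row_meas[measurable]: "(\<lambda>t. k s t) \<in> borel_measurable lborel"
  using measurable_Pair2[OF k_meas, of s] by simp

lemma row_sq_int: "integrable lborel (\<lambda>t. (k s t)\<^sup>2)"
proof (rule Bochner_Integration.integrable_bound)
  show "integrable lborel (\<lambda>t. b s * a t)" using a_int by simp
  show "AE t in lborel. norm ((k s t)\<^sup>2) \<le> norm (b s * a t)"
    using k_bound a_nn b_nn by (auto simp: mult.commute)
qed measurable

lemma row_sq_le: "(\<integral>t. (k s t)\<^sup>2 \<partial>lborel) \<le> b s * IA"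
proof -
  have "(\<integral>t. (k s t)\<^sup>2 \<partial>lborel) \<le> (\<integral>t. b s * a t \<partial>lborel)"
    by (rule Bochner_Integration.integral_mono[OF row_sq_int]) (use a_int k_bound in \<open>auto simp: mult.commute\<close>)
  then show ?thesis by (simp add: IA_def)
qed

lemma row_int: "x \<in> L2 \<Longrightarrow> integrable lborel (\<lambda>t. complex_of_real (k s t) * x t)"
  by (rule CS_cx(2)[OF _ _ row_sq_int]) auto

lemma row_abs_int: "x \<in> L2 \<Longrightarrow> integrable lborel (\<lambda>t. \<bar>k s t\<bar> * cmod (x t))"
  by (rule CS_cx(1)[OF _ _ row_sq_int]) auto

lemma row_abs_bound: "x \<in> L2 \<Longrightarrow> (\<integral>t. \<bar>k s t\<bar> * cmod (x t) \<partial>lborel) \<le> sqrt (b s * IA * EE x)"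
proof -
  assume x: "x \<in> L2"
  have "(\<integral>t. \<bar>k s t\<bar> * cmod (x t) \<partial>lborel)\<^sup>2 \<le> (\<integral>t. (k s t)\<^sup>2 \<partial>lborel) * EE x"
    by (rule CS_cx(3)[OF x _ row_sq_int]) simp
  also have "\<dots> \<le> b s * IA * EE x"
    by (rule mult_right_mono[OF row_sq_le EE_nonneg])
  finally show ?thesis by (rule real_le_rsqrt)
qed

lemma pt_norm: "x \<in> L2 \<Longrightarrow> cmod (int_op k x s) \<le> sqrt (b s * IA * EE x)"
proof -
  assume x: "x \<in> L2"
  have "cmod (int_op k x s) \<le> (\<integral>t. norm (complex_of_real (k s t) * x t) \<partial>lborel)"
    unfolding int_op_def by (rule integral_norm_bound)
  also have "\<dots> = (\<integral>t. \<bar>k s t\<bar> * cmod (x t) \<partial>lborel)" by (simp add: norm_mult)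
  also have "\<dots> \<le> sqrt (b s * IA * EE x)" by (rule row_abs_bound[OF x])
  finally show ?thesis .
qed

lemma pt_bound: "x \<in> L2 \<Longrightarrow> (cmod (int_op k x s))\<^sup>2 \<le> b s * IA * EE x"
proof -
  assume x: "x \<in> L2"
  have "0 \<le> b s * IA * EE x" using b_nn IA_nn EE_nonneg by simp
  then show ?thesis using pt_norm[OF x, of s]
    by (metis norm_ge_zero power_mono real_sqrt_pow2)
qed

lemma op_meas[measurable]: "x \<in> L2 \<Longrightarrow> int_op k x \<in> borel_measurable lborel"
proof -
  assume x: "x \<in> L2"
  have [measurable]: "x \<in> borel_measurable lborel" using x by (simp add: L2_def)
  show ?thesis unfolding int_op_def
    by (rule lborel.borel_measurable_lebesgue_integral) measurable
qed

lemma op_L2: "x \<in> L2 \<Longrightarrow> int_op k x \<in> L2"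
  and op_EE: "x \<in> L2 \<Longrightarrow> EE (int_op k x) \<le> IB * IA * EE x"
proof -
  assume x: "x \<in> L2"
  have bi: "integrable lborel (\<lambda>s. b s * (IA * EE x))" using b_int by simp
  have i: "integrable lborel (\<lambda>s. (cmod (int_op k x s))\<^sup>2)"
  proof (rule Bochner_Integration.integrable_bound[OF bi])
    show "(\<lambda>s. (cmod (int_op k x s))\<^sup>2) \<in> borel_measurable lborel" using op_meas[OF x] by measurable
    show "AE s in lborel. norm ((cmod (int_op k x s))\<^sup>2) \<le> norm (b s * (IA * EE x))"
      using pt_bound[OF x] b_nn IA_nn EE_nonneg by (auto simp: mult.assoc)
  qed
  show "int_op k x \<in> L2" using i op_meas[OF x] by (simp add: L2_def)
  have "EE (int_op k x) \<le> (\<integral>s. b s * (IA * EE x) \<partial>lborel)"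
    unfolding EE_def[of "int_op k x"] by (rule Bochner_Integration.integral_mono[OF i bi]) (use pt_bound[OF x] in \<open>simp add: mult.assoc\<close>)
  then show "EE (int_op k x) \<le> IB * IA * EE x" by (simp add: IB_def)
qed

lemma op_scale: "int_op k (\<lambda>t. c * x t) s = c * int_op k x s"
proof -
  have "(\<lambda>t. complex_of_real (k s t) * (c * x t)) = (\<lambda>t. c * (complex_of_real (k s t) * x t))"
    by (auto simp: ac_simps)
  then show ?thesis unfolding int_op_def by simp
qed

lemma op_diff: "x \<in> L2 \<Longrightarrow> y \<in> L2 \<Longrightarrow> int_op k (\<lambda>t. x t - y t) s = int_op k x s - int_op k y s"
  unfolding int_op_def
  by (simp add: right_diff_distrib Bochner_Integration.integral_diff[OF row_int row_int])

end

lemma abs_prod_le: "\<bar>x * y\<bar> \<le> (x::real)\<^sup>2 + y\<^sup>2"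
proof -
  have "2*\<bar>x\<bar>*\<bar>y\<bar> \<le> x\<^sup>2 + y\<^sup>2" using sum_squares_bound[of "\<bar>x\<bar>" "\<bar>y\<bar>"] by simp
  moreover have "0 \<le> \<bar>x\<bar>*\<bar>y\<bar>" by simp
  ultimately show ?thesis unfolding abs_mult by linarith
qed

lemma series_CS:
  fixes a b :: "nat \<Rightarrow> real"
  assumes a: "summable (\<lambda>n. (a n)\<^sup>2)" and b: "summable (\<lambda>n. (b n)\<^sup>2)"
  shows "summable (\<lambda>n. a n * b n)" and "(\<Sum>n. a n * b n)\<^sup>2 \<le> (\<Sum>n. (a n)\<^sup>2) * (\<Sum>n. (b n)\<^sup>2)"
proof -
  have ab: "summable (\<lambda>n. \<bar>a n * b n\<bar>)"
  proof (rule summable_comparison_test[OF _ summable_add[OF a b]])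
    show "\<exists>N. \<forall>n\<ge>N. norm \<bar>a n * b n\<bar> \<le> (a n)\<^sup>2 + (b n)\<^sup>2"
      using abs_prod_le by auto
  qed
  show s: "summable (\<lambda>n. a n * b n)" by (rule summable_rabs_cancel[OF ab])
  have "0 \<le> (\<Sum>n. (a n)\<^sup>2) * t\<^sup>2 + 2 * (\<Sum>n. a n * b n) * t + (\<Sum>n. (b n)\<^sup>2)" for t
  proof -
    have e: "(\<lambda>n. (t * a n + b n)\<^sup>2) = (\<lambda>n. (t\<^sup>2 * (a n)\<^sup>2 + (2*t) * (a n * b n)) + (b n)\<^sup>2)"
      by (auto simp: power2_eq_square algebra_simps)
    have s1: "summable (\<lambda>n. t\<^sup>2 * (a n)\<^sup>2)" by (rule summable_mult[OF a])
    have s2: "summable (\<lambda>n. (2*t) * (a n * b n))" by (rule summable_mult[OF s])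
    have s12: "summable (\<lambda>n. t\<^sup>2 * (a n)\<^sup>2 + (2*t) * (a n * b n))" by (rule summable_add[OF s1 s2])
    have "(\<Sum>n. (t * a n + b n)\<^sup>2) = (\<Sum>n. t\<^sup>2 * (a n)\<^sup>2 + (2*t) * (a n * b n)) + (\<Sum>n. (b n)\<^sup>2)"
      unfolding e by (rule suminf_add[OF s12 b, symmetric])
    also have "(\<Sum>n. t\<^sup>2 * (a n)\<^sup>2 + (2*t) * (a n * b n)) = (\<Sum>n. t\<^sup>2 * (a n)\<^sup>2) + (\<Sum>n. (2*t) * (a n * b n))"
      by (rule suminf_add[OF s1 s2, symmetric])
    also have "(\<Sum>n. t\<^sup>2 * (a n)\<^sup>2) = t\<^sup>2 * (\<Sum>n. (a n)\<^sup>2)" by (rule suminf_mult[OF a])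
    also have "(\<Sum>n. (2*t) * (a n * b n)) = (2*t) * (\<Sum>n. a n * b n)" by (rule suminf_mult[OF s])
    finally have eq: "(\<Sum>n. (t * a n + b n)\<^sup>2) = t\<^sup>2 * (\<Sum>n. (a n)\<^sup>2) + 2 * t * (\<Sum>n. a n * b n) + (\<Sum>n. (b n)\<^sup>2)" .
    have "summable (\<lambda>n. (t * a n + b n)\<^sup>2)" unfolding e by (rule summable_add[OF s12 b])
    then have "0 \<le> (\<Sum>n. (t * a n + b n)\<^sup>2)" by (rule suminf_nonneg) simp
    then show ?thesis unfolding eq by (simp add: algebra_simps)
  qed
  from quad_disc[OF this] show "(\<Sum>n. a n * b n)\<^sup>2 \<le> (\<Sum>n. (a n)\<^sup>2) * (\<Sum>n. (b n)\<^sup>2)"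
    by (simp add: suminf_nonneg a)
qed


lemma series_L2:
  assumes xs: "\<And>n. xs n \<in> L2" and E: "\<And>n. EE (xs n) \<le> C * r^n" and r: "0 < r" "r < 1"
  shows "AE t in lborel. summable (\<lambda>n. cmod (xs n t))"
    and "(\<lambda>t. \<Sum>n. xs n t) \<in> L2"
    and "EE (\<lambda>t. \<Sum>n. xs n t) \<le> C / (1 - sqrt r)\<^sup>2"
proof -
  define w where "w = sqrt r"
  have w: "0 < w" "w < 1" "r = w * w" using r by (auto simp: w_def)
  have meas[measurable]: "\<And>n. xs n \<in> borel_measurable lborel" using xs by (simp add: L2_def)
  have C0: "0 \<le> C" using E[of 0] EE_nonneg[of "xs 0"] by simp
  define f where "f n t = (cmod (xs n t))\<^sup>2 / w^n" for n t
  have f_nn: "0 \<le> f n t" for n t unfolding f_def using w(1) by (intro divide_nonneg_pos) auto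
  have f_meas[measurable]: "f n \<in> borel_measurable lborel" for n unfolding f_def by measurable
  have fi: "integrable lborel (f n)" for n
    unfolding f_def using L2_int[OF xs[of n]] by simp
  have fint: "integral\<^sup>L lborel (f n) = EE (xs n) / w^n" for n
    unfolding f_def EE_def by simp
  have fle: "integral\<^sup>L lborel (f n) \<le> C * w^n" for n
  proof -
    have "EE (xs n) / w^n \<le> C * r^n / w^n" using E[of n] w by (simp add: divide_right_mono)
    also have "\<dots> = C * w^n" using w by (simp add: power_mult_distrib)
    finally show ?thesis by (simp add: fint)
  qed
  have geo: "summable (\<lambda>n. C * w^n)" using w by (intro summable_mult summable_geometric) simp
  have fint_nn: "0 \<le> integral\<^sup>L lborel (f n)" for n unfolding fint using w(1) EE_nonneg[of "xs n"] by (intro divide_nonneg_pos) auto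
  have sumI: "summable (\<lambda>n. integral\<^sup>L lborel (f n))"
    by (rule summable_comparison_test[OF _ geo]) (use fle fint_nn in auto)
  have "(\<integral>\<^sup>+t. (\<Sum>n. ennreal (f n t)) \<partial>lborel) = (\<Sum>n. \<integral>\<^sup>+t. ennreal (f n t) \<partial>lborel)"
    by (rule nn_integral_suminf) measurable
  also have "\<dots> = (\<Sum>n. ennreal (integral\<^sup>L lborel (f n)))"
    by (subst nn_integral_eq_integral[OF fi]) (auto simp: f_nn)
  also have "\<dots> = ennreal (\<Sum>n. integral\<^sup>L lborel (f n))"
    by (rule suminf_ennreal2[OF fint_nn sumI])
  finally have "(\<integral>\<^sup>+t. (\<Sum>n. ennreal (f n t)) \<partial>lborel) \<noteq> \<infinity>" by simp
  then have "AE t in lborel. (\<Sum>n. ennreal (f n t)) \<noteq> \<infinity>"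
    by (intro nn_integral_noteq_infinite) measurable
  then have fsum: "AE t in lborel. summable (\<lambda>n. f n t)"
    by eventually_elim (rule summable_suminf_not_top[OF f_nn], simp)
  have cmle: "cmod (xs n t) \<le> f n t + w^n" for n t
  proof (cases "cmod (xs n t) \<le> w^n")
    case True then show ?thesis using f_nn[of n t] by simp
  next
    case False
    then have "cmod (xs n t) * w^n \<le> (cmod (xs n t))\<^sup>2"
      by (simp add: power2_eq_square mult_left_mono)
    then have "cmod (xs n t) \<le> f n t" using w by (simp add: f_def pos_le_divide_eq)
    then show ?thesis using w(1) by (smt (verit) zero_le_power)
  qed
  show sm: "AE t in lborel. summable (\<lambda>n. cmod (xs n t))"
    using fsum
  proof eventually_elim
    case (elim t)
    show ?case
      by (rule summable_comparison_test[OF _ summable_add[OF elim summable_geometric]])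
         (use cmle w in auto)
  qed
  have wsum: "(\<Sum>n. w^n) = 1 / (1 - w)" using w by (simp add: suminf_geometric)
  have pt: "AE t in lborel. (cmod (\<Sum>n. xs n t))\<^sup>2 \<le> (1 / (1 - w)) * (\<Sum>n. f n t)"
    using sm fsum
  proof eventually_elim
    case (elim t)
    define a where "a n = sqrt (f n t)" for n
    define b where "b n = sqrt (w^n)" for n
    have ab: "a n * b n = cmod (xs n t)" for n
      using w unfolding a_def b_def f_def
      by (simp add: real_sqrt_mult[symmetric])
    have a2: "(\<lambda>n. (a n)\<^sup>2) = (\<lambda>n. f n t)" using f_nn by (simp add: a_def)
    have b2: "(\<lambda>n. (b n)\<^sup>2) = (\<lambda>n. w^n)" using w by (simp add: b_def)
    have sa: "summable (\<lambda>n. (a n)\<^sup>2)" unfolding a2 by (rule elim(2))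
    have sb: "summable (\<lambda>n. (b n)\<^sup>2)" unfolding b2 using w by simp
    have "cmod (\<Sum>n. xs n t) \<le> (\<Sum>n. cmod (xs n t))" by (rule summable_norm[OF elim(1)])
    then have "(cmod (\<Sum>n. xs n t))\<^sup>2 \<le> (\<Sum>n. cmod (xs n t))\<^sup>2" by (simp add: power_mono)
    also have "\<dots> = (\<Sum>n. a n * b n)\<^sup>2" by (simp add: ab)
    also have "\<dots> \<le> (\<Sum>n. (a n)\<^sup>2) * (\<Sum>n. (b n)\<^sup>2)" by (rule series_CS(2)[OF sa sb])
    also have "\<dots> = (1 / (1 - w)) * (\<Sum>n. f n t)" unfolding a2 b2 wsum by simp
    finally show ?case .
  qed
  have Si: "integrable lborel (\<lambda>t. \<Sum>n. f n t)"
    by (rule integrable_suminf[OF fi]) (use fsum sumI f_nn in auto)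
  have Sint: "(\<integral>t. (\<Sum>n. f n t) \<partial>lborel) = (\<Sum>n. integral\<^sup>L lborel (f n))"
    by (rule integral_suminf[OF fi]) (use fsum sumI f_nn in auto)
  have Sle: "(\<Sum>n. integral\<^sup>L lborel (f n)) \<le> C / (1 - w)"
  proof -
    have "(\<Sum>n. integral\<^sup>L lborel (f n)) \<le> (\<Sum>n. C * w^n)" by (rule suminf_le[OF fle sumI geo])
    also have "\<dots> = C / (1 - w)" using w by (simp add: suminf_mult wsum)
    finally show ?thesis .
  qed
  have bi: "integrable lborel (\<lambda>t. (1 / (1 - w)) * (\<Sum>n. f n t))" using Si by simp
  have bnd: "AE t in lborel. norm ((cmod (\<Sum>n. xs n t))\<^sup>2) \<le> norm ((1 / (1 - w)) * (\<Sum>n. f n t))"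
    using pt fsum
  proof eventually_elim
    case (elim t)
    have "0 \<le> (\<Sum>n. f n t)" by (rule suminf_nonneg[OF elim(2) f_nn])
    then show ?case using elim(1) w by simp
  qed
  have i2: "integrable lborel (\<lambda>t. (cmod (\<Sum>n. xs n t))\<^sup>2)"
    by (rule Bochner_Integration.integrable_bound[OF bi _ bnd]) measurable
  show "(\<lambda>t. \<Sum>n. xs n t) \<in> L2" by (rule L2I[OF _ i2]) measurable
  have "EE (\<lambda>t. \<Sum>n. xs n t) \<le> (\<integral>t. (1 / (1 - w)) * (\<Sum>n. f n t) \<partial>lborel)"
    unfolding EE_def
    by (rule integral_mono_AE[OF i2 bi]) (use pt in \<open>auto elim!: eventually_mono\<close>)
  also have "\<dots> = (1 / (1 - w)) * (\<Sum>n. integral\<^sup>L lborel (f n))" by (simp add: Sint)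
  also have "\<dots> \<le> (1 / (1 - w)) * (C / (1 - w))" using w by (intro mult_left_mono Sle) auto
  also have "\<dots> = C / (1 - sqrt r)\<^sup>2" by (simp add: w_def power2_eq_square)
  finally show "EE (\<lambda>t. \<Sum>n. xs n t) \<le> C / (1 - sqrt r)\<^sup>2" .
qed

context kern begin

lemma op_suminf:
  assumes xs: "\<And>n. xs n \<in> L2" and E: "\<And>n. EE (xs n) \<le> C * r^n" and r: "0 \<le> r" "r < 1"
    and sm: "AE t in lborel. summable (\<lambda>n. cmod (xs n t))"
    and ym[measurable]: "y \<in> borel_measurable lborel"
    and y: "AE t in lborel. y t = (\<Sum>n. xs n t)"
  shows "summable (\<lambda>n. cmod (int_op k (xs n) s))"
    and "int_op k y s = (\<Sum>n. int_op k (xs n) s)"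
proof -
  have meas[measurable]: "\<And>n. xs n \<in> borel_measurable lborel" using xs by (simp add: L2_def)
  have C0: "0 \<le> C" using E[of 0] EE_nonneg[of "xs 0"] by simp
  define G where "G n = sqrt (b s * IA * C) * sqrt r ^ n" for n
  have G: "summable G" unfolding G_def using r
    by (intro summable_mult summable_geometric) (simp add: real_sqrt_lt_1_iff)
  have bnd: "(\<integral>t. \<bar>k s t\<bar> * cmod (xs n t) \<partial>lborel) \<le> G n" for n
  proof -
    have "(\<integral>t. \<bar>k s t\<bar> * cmod (xs n t) \<partial>lborel) \<le> sqrt (b s * IA * EE (xs n))"
      by (rule row_abs_bound[OF xs])
    also have "\<dots> \<le> sqrt (b s * IA * (C * r^n))"
      using E[of n] b_nn IA_nn by (intro real_sqrt_le_mono mult_left_mono) auto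
    also have "\<dots> = G n" by (simp add: G_def real_sqrt_mult real_sqrt_power mult.assoc)
    finally show ?thesis .
  qed
  show "summable (\<lambda>n. cmod (int_op k (xs n) s))"
  proof (rule summable_comparison_test[OF _ G])
    have "cmod (int_op k (xs n) s) \<le> G n" for n
    proof -
      have "cmod (int_op k (xs n) s) \<le> (\<integral>t. norm (complex_of_real (k s t) * xs n t) \<partial>lborel)"
        unfolding int_op_def by (rule integral_norm_bound)
      also have "\<dots> = (\<integral>t. \<bar>k s t\<bar> * cmod (xs n t) \<partial>lborel)" by (simp add: norm_mult)
      finally show ?thesis using bnd[of n] by simp
    qed
    then show "\<exists>N. \<forall>n\<ge>N. norm (cmod (int_op k (xs n) s)) \<le> G n" by simp
  qed
  define f where "f n t = complex_of_real (k s t) * xs n t" for n t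
  have fi: "integrable lborel (f n)" for n unfolding f_def by (rule row_int[OF xs])
  have fsm: "AE t in lborel. summable (\<lambda>n. norm (f n t))"
    using sm by eventually_elim (simp add: f_def norm_mult summable_mult)
  have fI: "summable (\<lambda>n. \<integral>t. norm (f n t) \<partial>lborel)"
  proof (rule summable_comparison_test[OF _ G])
    have "(\<integral>t. norm (f n t) \<partial>lborel) = (\<integral>t. \<bar>k s t\<bar> * cmod (xs n t) \<partial>lborel)" for n
      by (simp add: f_def norm_mult)
    moreover have "0 \<le> (\<integral>t. norm (f n t) \<partial>lborel)" for n by simp
    ultimately show "\<exists>N. \<forall>n\<ge>N. norm (\<integral>t. norm (f n t) \<partial>lborel) \<le> G n" using bnd by simp
  qed
  have "int_op k y s = (\<integral>t. (\<Sum>n. f n t) \<partial>lborel)"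
    unfolding int_op_def
  proof (rule integral_cong_AE)
    show "AE t in lborel. complex_of_real (k s t) * y t = (\<Sum>n. f n t)"
      using y sm
    proof eventually_elim
      case (elim t)
      have "summable (\<lambda>n. xs n t)" by (rule summable_norm_cancel[OF elim(2)])
      then show ?case unfolding f_def elim(1) by (rule suminf_mult[symmetric])
    qed
  qed (auto simp: f_def)
  also have "\<dots> = (\<Sum>n. integral\<^sup>L lborel (f n))" by (rule integral_suminf[OF fi fsm fI])
  also have "\<dots> = (\<Sum>n. int_op k (xs n) s)" unfolding f_def[abs_def] int_op_def by simp
  finally show "int_op k y s = (\<Sum>n. int_op k (xs n) s)" .
qed

end


lemma borel_measurable_cnj[measurable (raw)]:
  "f \<in> borel_measurable M \<Longrightarrow> (\<lambda>x. cnj (f x)) \<in> borel_measurable M"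
  by (rule borel_measurable_continuous_on[where f=cnj]) (auto intro: continuous_intros)

lemma L2_prod_int:
  assumes x: "x \<in> L2" and y: "y \<in> L2"
  shows "integrable lborel (\<lambda>s. x s * cnj (y s))"
proof -
  have [measurable]: "x \<in> borel_measurable lborel" "y \<in> borel_measurable lborel"
    using x y by (auto simp: L2_def)
  have bi: "integrable lborel (\<lambda>s. (cmod (x s))\<^sup>2 + (cmod (y s))\<^sup>2)"
    using L2_int[OF x] L2_int[OF y] by simp
  show ?thesis
  proof (rule Bochner_Integration.integrable_bound[OF bi])
    show "AE s in lborel. norm (x s * cnj (y s)) \<le> norm ((cmod (x s))\<^sup>2 + (cmod (y s))\<^sup>2)"
      using abs_prod_le[of "cmod (x _)" "cmod (y _)"] by (auto simp: norm_mult)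
  qed measurable
qed

context kern begin

lemma b_meas[measurable]: "b \<in> borel_measurable borel"
  using borel_measurable_integrable[OF b_int] by simp
lemma a_meas[measurable]: "a \<in> borel_measurable borel"
  using borel_measurable_integrable[OF a_int] by simp

lemma adj_id:
  assumes x: "x \<in> L2" and z: "z \<in> L2"
  shows "(\<integral>s. int_op k z s * cnj (x s) \<partial>lborel) = (\<integral>t. z t * cnj (int_op (\<lambda>t s. k s t) x t) \<partial>lborel)"
proof -
  have [measurable]: "x \<in> borel_measurable lborel" "z \<in> borel_measurable lborel"
    using x z by (auto simp: L2_def)
  define F where "F s t = complex_of_real (k s t) * z t * cnj (x s)" for s t
  have Fm[measurable]: "(\<lambda>(s,t). F s t) \<in> borel_measurable (lborel \<Otimes>\<^sub>M lborel)"
    unfolding F_def by measurable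
  have sq_b: "integrable lborel (\<lambda>s. (sqrt (b s * IA * EE z))\<^sup>2)"
    using b_int b_nn IA_nn EE_nonneg[of z] by simp
  have g_int: "integrable lborel (\<lambda>s. \<bar>sqrt (b s * IA * EE z)\<bar> * cmod (x s))"
    by (rule CS_cx(1)[OF x _ sq_b]) simp
  have int1: "integrable lborel (\<lambda>s. \<integral>t. norm (F s t) \<partial>lborel)"
  proof (rule Bochner_Integration.integrable_bound[OF g_int])
    show "(\<lambda>s. \<integral>t. norm (F s t) \<partial>lborel) \<in> borel_measurable lborel"
      by (rule lborel.borel_measurable_lebesgue_integral) (unfold F_def, measurable)
    show "AE s in lborel. norm (\<integral>t. norm (F s t) \<partial>lborel) \<le> norm (\<bar>sqrt (b s * IA * EE z)\<bar> * cmod (x s))"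
    proof
      fix s
      have e: "(\<integral>t. norm (F s t) \<partial>lborel) = cmod (x s) * (\<integral>t. \<bar>k s t\<bar> * cmod (z t) \<partial>lborel)"
        by (simp add: F_def norm_mult ac_simps)
      have "0 \<le> (\<integral>t. \<bar>k s t\<bar> * cmod (z t) \<partial>lborel)" by simp
      moreover have "(\<integral>t. \<bar>k s t\<bar> * cmod (z t) \<partial>lborel) \<le> sqrt (b s * IA * EE z)"
        by (rule row_abs_bound[OF z])
      ultimately show "norm (\<integral>t. norm (F s t) \<partial>lborel) \<le> norm (\<bar>sqrt (b s * IA * EE z)\<bar> * cmod (x s))"
        unfolding e by (simp add: mult_left_mono mult.commute)
    qed
  qed
  have int2: "AE s in lborel. integrable lborel (\<lambda>t. F s t)"
  proof
    fix s
    show "integrable lborel (\<lambda>t. F s t)"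
      unfolding F_def using row_int[OF z, of s] by simp
  qed
  have Fi: "integrable (lborel \<Otimes>\<^sub>M lborel) (\<lambda>(s,t). F s t)"
    by (rule lborel_pair.Fubini_integrable) (use Fm int1 int2 in simp_all)
  have "(\<integral>s. int_op k z s * cnj (x s) \<partial>lborel) = (\<integral>s. \<integral>t. F s t \<partial>lborel \<partial>lborel)"
    unfolding int_op_def F_def by simp
  also have "\<dots> = (\<integral>t. \<integral>s. F s t \<partial>lborel \<partial>lborel)"
    by (rule lborel_pair.Fubini_integral[OF Fi, symmetric])
  also have "\<dots> = (\<integral>t. z t * cnj (int_op (\<lambda>t s. k s t) x t) \<partial>lborel)"
  proof (rule Bochner_Integration.integral_cong[OF refl])
    fix t
    have "cnj (int_op (\<lambda>t s. k s t) x t) = (\<integral>s. cnj (complex_of_real (k s t) * x s) \<partial>lborel)"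
      unfolding int_op_def by (rule Bochner_Integration.integral_cnj[symmetric])
    then have h: "z t * cnj (int_op (\<lambda>t s. k s t) x t) = (\<integral>s. z t * (complex_of_real (k s t) * cnj (x s)) \<partial>lborel)"
      by simp
    have fe: "(\<lambda>s. F s t) = (\<lambda>s. z t * (complex_of_real (k s t) * cnj (x s)))"
      by (rule ext) (simp add: F_def ac_simps)
    show "(\<integral>s. F s t \<partial>lborel) = z t * cnj (int_op (\<lambda>t s. k s t) x t)"
      unfolding fe by (rule h[symmetric])
  qed
  finally show ?thesis .
qed

end

lemma integrable_inv_quad:
  fixes \<alpha> \<beta> :: real
  assumes "0 < \<alpha>" "0 < \<beta>"
  shows "integrable lborel (\<lambda>x. 1 / (\<alpha> * x\<^sup>2 + \<beta>))"
proof -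
  define m where "m = min \<alpha> \<beta>"
  have m: "0 < m" "m \<le> \<alpha>" "m \<le> \<beta>" using assms by (auto simp: m_def)
  have i: "integrable lborel (\<lambda>x::real. inverse (1 + x^2))"
    using integrable_inverse_1_plus_square by (simp add: set_integrable_def einterval_def)
  have i2: "integrable lborel (\<lambda>x::real. (1/m) * inverse (1 + x^2))" using i by simp
  show ?thesis
  proof (rule Bochner_Integration.integrable_bound[OF i2])
    show "AE x in lborel. norm (1 / (\<alpha> * x\<^sup>2 + \<beta>)) \<le> norm ((1/m) * inverse (1 + x^2))"
    proof
      fix x :: real
      have c: "m * (1 + x\<^sup>2) \<le> \<alpha> * x\<^sup>2 + \<beta>"
        using m mult_right_mono[OF m(2), of "x\<^sup>2"] by (simp add: algebra_simps)
      have p1: "0 < m * (1 + x\<^sup>2)" using m by (simp add: add_pos_nonneg)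
      have p2: "0 < \<alpha> * x\<^sup>2 + \<beta>" using assms by (simp add: add_nonneg_pos)
      have "1 / (\<alpha> * x\<^sup>2 + \<beta>) \<le> 1 / (m * (1 + x\<^sup>2))"
        using c p1 p2 by (intro divide_left_mono) (auto intro: mult_pos_pos)
      then show "norm (1 / (\<alpha> * x\<^sup>2 + \<beta>)) \<le> norm ((1/m) * inverse (1 + x^2))"
        using m p2 by (simp add: field_simps add_pos_nonneg)
    qed
  qed measurable
qed

lemma key_ineq: "x\<^sup>2/2 + y\<^sup>2/4 \<le> x\<^sup>2 + (y - x)\<^sup>2" for x y :: real
proof -
  have "x\<^sup>2 + (y - x)\<^sup>2 - (x\<^sup>2/2 + y\<^sup>2/4) = 3/2*(x - 2*y/3)\<^sup>2 + y\<^sup>2/12"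
    by (simp add: power2_eq_square field_simps)
  moreover have "0 \<le> 3/2*(x - 2*y/3)\<^sup>2 + y\<^sup>2/12" by simp
  ultimately show ?thesis by linarith
qed

lemma inv_sq_bound:
  fixes A B D :: real
  assumes "0 < A" "0 < B" "A + B \<le> D"
  shows "(1 / (pi * D))\<^sup>2 \<le> 1 / A * (1 / (pi\<^sup>2 * B))"
proof -
  have D: "0 < D" using assms by simp
  have "A * B \<le> (A + B)\<^sup>2" using assms by (simp add: power2_eq_square algebra_simps)
  also have "\<dots> \<le> D\<^sup>2" using assms by (intro power_mono) auto
  finally have "pi\<^sup>2 * (A * B) \<le> pi\<^sup>2 * D\<^sup>2" by (intro mult_left_mono) auto
  then have "1 / (pi\<^sup>2 * D\<^sup>2) \<le> 1 / (pi\<^sup>2 * (A * B))"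
    using assms by (intro divide_left_mono) auto
  moreover have "(1 / (pi * D))\<^sup>2 = 1 / (pi\<^sup>2 * D\<^sup>2)" by (simp add: power_divide power_mult_distrib)
  moreover have "1 / (pi\<^sup>2 * (A * B)) = 1 / A * (1 / (pi\<^sup>2 * B))" by simp
  ultimately show ?thesis by simp
qed

lemma kern_T2:
  assumes eps: "0 < \<epsilon>"
  shows "kern (T2_kernel \<epsilon>) (\<lambda>t. 1 / (1/2 * t\<^sup>2 + \<epsilon>)) (\<lambda>s. 1 / (pi\<^sup>2 * (1/4 * s\<^sup>2 + \<epsilon>))) (1 / (pi\<^sup>2 * \<epsilon>))"
proof
  show "(\<lambda>(s, t). T2_kernel \<epsilon> s t) \<in> borel_measurable (lborel \<Otimes>\<^sub>M lborel)"
    unfolding T2_kernel_def by measurable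
  fix s t :: real
  show "(T2_kernel \<epsilon> s t)\<^sup>2 \<le> 1 / (1/2 * t\<^sup>2 + \<epsilon>) * (1 / (pi\<^sup>2 * (1/4 * s\<^sup>2 + \<epsilon>)))"
    unfolding T2_kernel_def
    by (rule inv_sq_bound) (use eps key_ineq[of t s] in \<open>auto intro!: add_nonneg_pos\<close>)
  show "0 \<le> 1 / (1/2 * t\<^sup>2 + \<epsilon>)" using eps by (simp add: add_nonneg_pos)
  show "0 \<le> 1 / (pi\<^sup>2 * (1/4 * s\<^sup>2 + \<epsilon>))" using eps by (simp add: add_nonneg_pos)
  show "1 / (pi\<^sup>2 * (1/4 * s\<^sup>2 + \<epsilon>)) \<le> 1 / (pi\<^sup>2 * \<epsilon>)"
    using eps by (intro divide_left_mono mult_left_mono mult_pos_pos) (auto simp: add_nonneg_pos)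
next
  show "integrable lborel (\<lambda>t. 1 / (1/2 * t\<^sup>2 + \<epsilon>))" using eps by (intro integrable_inv_quad) auto
  have "integrable lborel (\<lambda>s. 1 / ((pi\<^sup>2/4) * s\<^sup>2 + pi\<^sup>2 * \<epsilon>))" using eps by (intro integrable_inv_quad) auto
  then show "integrable lborel (\<lambda>s. 1 / (pi\<^sup>2 * (1/4 * s\<^sup>2 + \<epsilon>)))" by (simp add: algebra_simps)
qed

lemma kern_T2adj:
  assumes eps: "0 < \<epsilon>"
  shows "kern (\<lambda>s t. T2_kernel \<epsilon> t s) (\<lambda>t. 1 / (1/4 * t\<^sup>2 + \<epsilon>)) (\<lambda>s. 1 / (pi\<^sup>2 * (1/2 * s\<^sup>2 + \<epsilon>))) (1 / (pi\<^sup>2 * \<epsilon>))"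
proof
  show "(\<lambda>(s, t). T2_kernel \<epsilon> t s) \<in> borel_measurable (lborel \<Otimes>\<^sub>M lborel)"
    unfolding T2_kernel_def by measurable
  fix s t :: real
  show "(T2_kernel \<epsilon> t s)\<^sup>2 \<le> 1 / (1/4 * t\<^sup>2 + \<epsilon>) * (1 / (pi\<^sup>2 * (1/2 * s\<^sup>2 + \<epsilon>)))"
    unfolding T2_kernel_def
    by (rule inv_sq_bound) (use eps key_ineq[of s t] in \<open>auto intro!: add_nonneg_pos\<close>)
  show "0 \<le> 1 / (1/4 * t\<^sup>2 + \<epsilon>)" using eps by (simp add: add_nonneg_pos)
  show "0 \<le> 1 / (pi\<^sup>2 * (1/2 * s\<^sup>2 + \<epsilon>))" using eps by (simp add: add_nonneg_pos)
  show "1 / (pi\<^sup>2 * (1/2 * s\<^sup>2 + \<epsilon>)) \<le> 1 / (pi\<^sup>2 * \<epsilon>)"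
    using eps by (intro divide_left_mono mult_left_mono mult_pos_pos) (auto simp: add_nonneg_pos)
next
  show "integrable lborel (\<lambda>t. 1 / (1/4 * t\<^sup>2 + \<epsilon>))" using eps by (intro integrable_inv_quad) auto
  have "integrable lborel (\<lambda>s. 1 / ((pi\<^sup>2/2) * s\<^sup>2 + pi\<^sup>2 * \<epsilon>))" using eps by (intro integrable_inv_quad) auto
  then show "integrable lborel (\<lambda>s. 1 / (pi\<^sup>2 * (1/2 * s\<^sup>2 + \<epsilon>)))" by (simp add: algebra_simps)
qed


locale msetup =
  fixes \<kappa>t \<kappa> \<epsilon> :: real
  assumes kt: "\<kappa>t > 0" and kap: "\<kappa> \<ge> 1 / sqrt 2" and eps: "\<epsilon> > 1"
begin

sublocale K2: kern "T2_kernel \<epsilon>" "\<lambda>t. 1 / (1/2 * t\<^sup>2 + \<epsilon>)" "\<lambda>s. 1 / (pi\<^sup>2 * (1/4 * s\<^sup>2 + \<epsilon>))" "1 / (pi\<^sup>2 * \<epsilon>)"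
  by (rule kern_T2) (use eps in simp)

sublocale KA: kern "\<lambda>s t. T2_kernel \<epsilon> t s" "\<lambda>t. 1 / (1/4 * t\<^sup>2 + \<epsilon>)" "\<lambda>s. 1 / (pi\<^sup>2 * (1/2 * s\<^sup>2 + \<epsilon>))" "1 / (pi\<^sup>2 * \<epsilon>)"
  by (rule kern_T2adj) (use eps in simp)

definition "c = \<kappa> / \<kappa>t"
definition "q s = c + 1 / sqrt (s\<^sup>2 + 2 * \<epsilon>)"
definition "sig s = (1 / \<kappa>) * inverse (1 - T3_symbol \<epsilon> s / \<kappa>)"
definition "sm = 1 / (\<kappa> - 1/2)"
definition "CT = K2.IB * K2.IA"
definition "CA = KA.IB * KA.IA"
definition "P x = T2_adj \<epsilon> (\<lambda>t. complex_of_real (sig t) * T2 \<epsilon> x t)"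
definition "Eq x = (\<integral>s. q s * (cmod (x s))\<^sup>2 \<partial>lborel)"

lemma kap_half: "\<kappa> > 1/2"
proof -
  have "sqrt 2 < 2" by (smt (verit) real_less_rsqrt real_sqrt_four real_sqrt_less_iff)
  then have h: "1/2 < 1 / sqrt 2" by (simp add: field_simps)
  show ?thesis using kap h by linarith
qed

lemma c_pos: "0 < c" using kt kap_half by (simp add: c_def)

lemma q_ge: "c \<le> q s" and q_le: "q s \<le> c + 1" and q_pos: "0 < q s"
proof -
  have "1 \<le> s\<^sup>2 + 2 * \<epsilon>" using eps by (smt (verit) zero_le_power2)
  then have "1 \<le> sqrt (s\<^sup>2 + 2 * \<epsilon>)" by simp
  then have h1: "0 \<le> 1 / sqrt (s\<^sup>2 + 2 * \<epsilon>)" and h2: "1 / sqrt (s\<^sup>2 + 2 * \<epsilon>) \<le> 1" by auto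
  show "c \<le> q s" "q s \<le> c + 1" "0 < q s" using c_pos h1 h2 unfolding q_def by linarith+
qed

lemma q_meas[measurable]: "q \<in> borel_measurable borel"
  unfolding q_def[abs_def] by measurable

lemma T3_lt: "T3_symbol \<epsilon> s < 1/2" and T3_nn: "0 \<le> T3_symbol \<epsilon> s"
proof -
  have f4: "4 < s\<^sup>2 + 4 * \<epsilon>" using eps by (smt (verit) zero_le_power2)
  then have "2 < sqrt (s\<^sup>2 + 4 * \<epsilon>)" by (metis real_less_rsqrt power2_eq_square numeral_Bit0 mult_2_right real_sqrt_four real_sqrt_less_iff)
  then have "1 / sqrt (s\<^sup>2 + 4 * \<epsilon>) < 1 / 2" using f4 by (intro divide_strict_left_mono) auto
  then show "T3_symbol \<epsilon> s < 1/2" by (simp add: T3_symbol_def)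
  have "0 \<le> s\<^sup>2 + 4 * \<epsilon>" using eps by (smt (verit) zero_le_power2)
  then show "0 \<le> T3_symbol \<epsilon> s" by (simp add: T3_symbol_def)
qed

lemma sig_eq: "sig s = 1 / (\<kappa> - T3_symbol \<epsilon> s)"
  using kap_half T3_lt[of s] by (simp add: sig_def field_simps)

lemma sig_pos: "0 < sig s" and sig_le: "sig s \<le> sm"
proof -
  have "\<kappa> - 1/2 \<le> \<kappa> - T3_symbol \<epsilon> s" "0 < \<kappa> - 1/2" using T3_lt[of s] kap_half by auto
  then show "0 < sig s" "sig s \<le> sm" unfolding sig_eq sm_def
    by (auto intro!: divide_left_mono)
qed

lemma sm_pos: "0 < sm" using kap_half by (simp add: sm_def)

lemma sig_meas[measurable]: "sig \<in> borel_measurable borel"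
  unfolding sig_def[abs_def] T3_symbol_def[abs_def] by measurable

lemma T2_is: "T2 \<epsilon> = int_op (T2_kernel \<epsilon>)" by (simp add: T2_def)
lemma T2adj_is: "T2_adj \<epsilon> = int_op (\<lambda>s t. T2_kernel \<epsilon> t s)" by (simp add: T2_adj_def)

lemma T2_L2: "x \<in> L2 \<Longrightarrow> T2 \<epsilon> x \<in> L2" unfolding T2_is by (rule K2.op_L2)
lemma T2_EE: "x \<in> L2 \<Longrightarrow> EE (T2 \<epsilon> x) \<le> CT * EE x" unfolding T2_is CT_def by (rule K2.op_EE)

lemma sigT_L2: "x \<in> L2 \<Longrightarrow> (\<lambda>t. complex_of_real (sig t) * T2 \<epsilon> x t) \<in> L2"
proof -
  assume x: "x \<in> L2"
  have y: "T2 \<epsilon> x \<in> L2" by (rule T2_L2[OF x])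
  have [measurable]: "T2 \<epsilon> x \<in> borel_measurable lborel" using y by (simp add: L2_def)
  have bi: "integrable lborel (\<lambda>t. sm\<^sup>2 * (cmod (T2 \<epsilon> x t))\<^sup>2)" using L2_int[OF y] by simp
  show ?thesis
  proof (rule L2I)
    show "integrable lborel (\<lambda>s. (cmod (complex_of_real (sig s) * T2 \<epsilon> x s))\<^sup>2)"
    proof (rule Bochner_Integration.integrable_bound[OF bi])
      show "AE s in lborel. norm ((cmod (complex_of_real (sig s) * T2 \<epsilon> x s))\<^sup>2) \<le> norm (sm\<^sup>2 * (cmod (T2 \<epsilon> x s))\<^sup>2)"
      proof
        fix s
        have "(sig s)\<^sup>2 \<le> sm\<^sup>2" using sig_pos[of s] sig_le[of s] by (intro power_mono) auto
        then show "norm ((cmod (complex_of_real (sig s) * T2 \<epsilon> x s))\<^sup>2) \<le> norm (sm\<^sup>2 * (cmod (T2 \<epsilon> x s))\<^sup>2)"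
          by (simp add: norm_mult power_mult_distrib mult_right_mono)
      qed
    qed measurable
  qed measurable
qed

definition "sigT x = (\<lambda>t. complex_of_real (sig t) * T2 \<epsilon> x t)"
definition "DD x = (\<integral>t. sig t * (cmod (T2 \<epsilon> x t))\<^sup>2 \<partial>lborel)"

lemma P_is: "P x = T2_adj \<epsilon> (sigT x)" by (simp add: P_def sigT_def)

lemma DD_int: "x \<in> L2 \<Longrightarrow> integrable lborel (\<lambda>t. sig t * (cmod (T2 \<epsilon> x t))\<^sup>2)"
proof -
  assume x: "x \<in> L2"
  have y: "T2 \<epsilon> x \<in> L2" by (rule T2_L2[OF x])
  have [measurable]: "T2 \<epsilon> x \<in> borel_measurable lborel" using y by (simp add: L2_def)
  have bi: "integrable lborel (\<lambda>t. sm * (cmod (T2 \<epsilon> x t))\<^sup>2)" using L2_int[OF y] by simp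
  show ?thesis
  proof (rule Bochner_Integration.integrable_bound[OF bi])
    show "AE t in lborel. norm (sig t * (cmod (T2 \<epsilon> x t))\<^sup>2) \<le> norm (sm * (cmod (T2 \<epsilon> x t))\<^sup>2)"
    proof
      fix t
      have "sig t * (cmod (T2 \<epsilon> x t))\<^sup>2 \<le> sm * (cmod (T2 \<epsilon> x t))\<^sup>2"
        using sig_le[of t] by (intro mult_right_mono) auto
      then show "norm (sig t * (cmod (T2 \<epsilon> x t))\<^sup>2) \<le> norm (sm * (cmod (T2 \<epsilon> x t))\<^sup>2)"
        using sig_pos[of t] sm_pos by (simp add: abs_mult abs_of_pos)
    qed
  qed measurable
qed

lemma sigT_L2': "x \<in> L2 \<Longrightarrow> sigT x \<in> L2" unfolding sigT_def by (rule sigT_L2)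

lemma DD_nn: "0 \<le> DD x"
  unfolding DD_def by (rule Bochner_Integration.integral_nonneg) (simp add: sig_pos less_imp_le)

lemma sigT_EE: "x \<in> L2 \<Longrightarrow> EE (sigT x) \<le> sm * DD x"
proof -
  assume x: "x \<in> L2"
  have i1: "integrable lborel (\<lambda>s. (cmod (sigT x s))\<^sup>2)" using L2_int[OF sigT_L2[OF x]] by (simp add: sigT_def)
  have i2: "integrable lborel (\<lambda>t. sm * (sig t * (cmod (T2 \<epsilon> x t))\<^sup>2))" using DD_int[OF x] by simp
  have "EE (sigT x) \<le> (\<integral>t. sm * (sig t * (cmod (T2 \<epsilon> x t))\<^sup>2) \<partial>lborel)"
    unfolding EE_def
  proof (rule Bochner_Integration.integral_mono[OF i1 i2])
    fix t
    have e: "(cmod (sigT x t))\<^sup>2 = sig t * (sig t * (cmod (T2 \<epsilon> x t))\<^sup>2)"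
      using sig_pos[of t] by (simp add: sigT_def norm_mult power_mult_distrib power2_eq_square abs_of_pos)
    have "sig t * (sig t * (cmod (T2 \<epsilon> x t))\<^sup>2) \<le> sm * (sig t * (cmod (T2 \<epsilon> x t))\<^sup>2)"
      using sig_le[of t] sig_pos[of t] by (intro mult_right_mono) auto
    then show "(cmod (sigT x t))\<^sup>2 \<le> sm * (sig t * (cmod (T2 \<epsilon> x t))\<^sup>2)" unfolding e .
  qed
  then show ?thesis by (simp add: DD_def)
qed

lemma sigT_EE2: "x \<in> L2 \<Longrightarrow> EE (sigT x) \<le> sm\<^sup>2 * CT * EE x"
proof -
  assume x: "x \<in> L2"
  have i1: "integrable lborel (\<lambda>s. (cmod (sigT x s))\<^sup>2)" using L2_int[OF sigT_L2[OF x]] by (simp add: sigT_def)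
  have i2: "integrable lborel (\<lambda>t. sm\<^sup>2 * (cmod (T2 \<epsilon> x t))\<^sup>2)" using L2_int[OF T2_L2[OF x]] by simp
  have "EE (sigT x) \<le> (\<integral>t. sm\<^sup>2 * (cmod (T2 \<epsilon> x t))\<^sup>2 \<partial>lborel)"
    unfolding EE_def
  proof (rule Bochner_Integration.integral_mono[OF i1 i2])
    fix t
    have "(sig t)\<^sup>2 \<le> sm\<^sup>2" using sig_pos[of t] sig_le[of t] by (intro power_mono) auto
    then show "(cmod (sigT x t))\<^sup>2 \<le> sm\<^sup>2 * (cmod (T2 \<epsilon> x t))\<^sup>2"
      by (simp add: sigT_def norm_mult power_mult_distrib mult_right_mono)
  qed
  also have "\<dots> = sm\<^sup>2 * EE (T2 \<epsilon> x)" by (simp add: EE_def)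
  also have "\<dots> \<le> sm\<^sup>2 * (CT * EE x)" by (intro mult_left_mono T2_EE[OF x]) simp
  finally show ?thesis by (simp add: mult.assoc)
qed

lemma P_L2: "x \<in> L2 \<Longrightarrow> P x \<in> L2"
  unfolding P_is T2adj_is by (rule KA.op_L2[OF sigT_L2'])

lemma P_EE: "x \<in> L2 \<Longrightarrow> EE (P x) \<le> CA * EE (sigT x)"
  unfolding P_is T2adj_is CA_def by (rule KA.op_EE[OF sigT_L2'])

lemma CA_nn: "0 \<le> CA" and CT_nn: "0 \<le> CT"
  using KA.IA_nn KA.IB_nn K2.IA_nn K2.IB_nn by (auto simp: CA_def CT_def)

lemma P_EE2: "x \<in> L2 \<Longrightarrow> EE (P x) \<le> CA * (sm\<^sup>2 * CT) * EE x"
proof -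
  assume x: "x \<in> L2"
  have "EE (P x) \<le> CA * EE (sigT x)" by (rule P_EE[OF x])
  also have "\<dots> \<le> CA * (sm\<^sup>2 * CT * EE x)" by (intro mult_left_mono sigT_EE2[OF x] CA_nn)
  finally show ?thesis by (simp add: mult.assoc)
qed

lemma P_adj: "x \<in> L2 \<Longrightarrow> (\<integral>s. P x s * cnj (x s) \<partial>lborel) = complex_of_real (DD x)"
proof -
  assume x: "x \<in> L2"
  have "(\<integral>s. P x s * cnj (x s) \<partial>lborel) = (\<integral>t. sigT x t * cnj (int_op (\<lambda>t s. T2_kernel \<epsilon> t s) x t) \<partial>lborel)"
    unfolding P_is T2adj_is by (rule KA.adj_id[OF x]) (simp add: sigT_def sigT_L2[OF x])
  also have "\<dots> = (\<integral>t. complex_of_real (sig t * (cmod (T2 \<epsilon> x t))\<^sup>2) \<partial>lborel)"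
    by (rule Bochner_Integration.integral_cong[OF refl])
       (simp add: sigT_def T2_is mult.assoc complex_norm_square[symmetric] del: of_real_power)
  also have "\<dots> = complex_of_real (DD x)" unfolding DD_def by (rule integral_complex_of_real)
  finally show ?thesis .
qed

end

lemma cmod_diff_sq: "(cmod (u - v))\<^sup>2 \<le> 2 * (cmod u)\<^sup>2 + 2 * (cmod v)\<^sup>2"
proof -
  have "cmod (u - v) \<le> cmod u + cmod v" by (rule norm_triangle_ineq4)
  then have "(cmod (u - v))\<^sup>2 \<le> (cmod u + cmod v)\<^sup>2" by (intro power_mono) auto
  also have "\<dots> \<le> 2 * (cmod u)\<^sup>2 + 2 * (cmod v)\<^sup>2"
    using sum_squares_bound[of "cmod u" "cmod v"] by (simp add: power2_eq_square algebra_simps)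
  finally show ?thesis .
qed

lemma pt_ident:
  fixes q al be :: real and a b :: complex
  assumes "0 < q"
  shows "q * (cmod (complex_of_real al * a - complex_of_real be * b / complex_of_real q))\<^sup>2
     = al\<^sup>2 * (q * (cmod a)\<^sup>2) - 2 * al * be * Re (b * cnj a) + be\<^sup>2 * ((cmod b)\<^sup>2 / q)"
proof -
  have e: "complex_of_real al * a - complex_of_real be * b / complex_of_real q
      = Complex (al * Re a - be/q * Re b) (al * Im a - be/q * Im b)"
    by (simp add: complex_eq_iff)
  show ?thesis unfolding e cmod_power2[of a] cmod_power2[of b] cmod_power2[of "Complex _ _"]
    using assms by (simp add: power2_eq_square field_simps)
qed

context msetup begin

lemma Eq_int: "x \<in> L2 \<Longrightarrow> integrable lborel (\<lambda>s. q s * (cmod (x s))\<^sup>2)"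
proof -
  assume x: "x \<in> L2"
  have [measurable]: "x \<in> borel_measurable lborel" using x by (simp add: L2_def)
  have bi: "integrable lborel (\<lambda>s. (c + 1) * (cmod (x s))\<^sup>2)" using L2_int[OF x] by simp
  show ?thesis
  proof (rule Bochner_Integration.integrable_bound[OF bi])
    show "AE s in lborel. norm (q s * (cmod (x s))\<^sup>2) \<le> norm ((c + 1) * (cmod (x s))\<^sup>2)"
    proof
      fix s
      have "q s * (cmod (x s))\<^sup>2 \<le> (c + 1) * (cmod (x s))\<^sup>2" using q_le[of s] by (intro mult_right_mono) auto
      then show "norm (q s * (cmod (x s))\<^sup>2) \<le> norm ((c + 1) * (cmod (x s))\<^sup>2)"
        using q_pos[of s] c_pos by (simp add: abs_mult abs_of_pos)
    qed
  qed measurable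
qed

lemma Eq_ge: "x \<in> L2 \<Longrightarrow> c * EE x \<le> Eq x"
proof -
  assume x: "x \<in> L2"
  have "(\<integral>s. c * (cmod (x s))\<^sup>2 \<partial>lborel) \<le> Eq x" unfolding Eq_def
    by (rule Bochner_Integration.integral_mono[OF _ Eq_int[OF x]]) (use L2_int[OF x] q_ge in \<open>auto intro!: mult_right_mono\<close>)
  then show ?thesis by (simp add: EE_def)
qed

lemma Eq_le: "x \<in> L2 \<Longrightarrow> Eq x \<le> (c + 1) * EE x"
proof -
  assume x: "x \<in> L2"
  have "Eq x \<le> (\<integral>s. (c + 1) * (cmod (x s))\<^sup>2 \<partial>lborel)" unfolding Eq_def
    by (rule Bochner_Integration.integral_mono[OF Eq_int[OF x]]) (use L2_int[OF x] q_le in \<open>auto intro!: mult_right_mono\<close>)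
  then show ?thesis by (simp add: EE_def)
qed

definition "M = CA * sm / c + 1"
definition "tau = 1 / (M + 1)"
definition "al = M / (M + 1)"

lemma M_pos: "1 \<le> M" using CA_nn sm_pos c_pos by (simp add: M_def)
lemma tau_pos: "0 < tau" and tau_lt: "tau < 1" and al_eq: "al = 1 - tau" and al_pos: "0 < al" and al_lt: "al < 1"
  and al_tau: "al = M * tau"
  using M_pos by (auto simp: tau_def al_def field_simps)

lemma Pq_int: "x \<in> L2 \<Longrightarrow> integrable lborel (\<lambda>s. (cmod (P x s))\<^sup>2 / q s)"
  and Pq_le: "x \<in> L2 \<Longrightarrow> (\<integral>s. (cmod (P x s))\<^sup>2 / q s \<partial>lborel) \<le> M * DD x"
proof -
  assume x: "x \<in> L2"
  have px: "P x \<in> L2" by (rule P_L2[OF x])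
  have [measurable]: "P x \<in> borel_measurable lborel" using px by (simp add: L2_def)
  have bi: "integrable lborel (\<lambda>s. (cmod (P x s))\<^sup>2 / c)" using L2_int[OF px] by simp
  have le: "(cmod (P x s))\<^sup>2 / q s \<le> (cmod (P x s))\<^sup>2 / c" for s
    using q_ge[of s] c_pos by (intro divide_left_mono) auto
  show i: "integrable lborel (\<lambda>s. (cmod (P x s))\<^sup>2 / q s)"
  proof (rule Bochner_Integration.integrable_bound[OF bi])
    show "AE s in lborel. norm ((cmod (P x s))\<^sup>2 / q s) \<le> norm ((cmod (P x s))\<^sup>2 / c)"
      using le q_pos c_pos by (auto simp: abs_of_pos)
  qed measurable
  have "(\<integral>s. (cmod (P x s))\<^sup>2 / q s \<partial>lborel) \<le> (\<integral>s. (cmod (P x s))\<^sup>2 / c \<partial>lborel)"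
    by (rule Bochner_Integration.integral_mono[OF i bi le])
  also have "\<dots> = EE (P x) / c" by (simp add: EE_def)
  also have "\<dots> \<le> CA * EE (sigT x) / c" using c_pos P_EE[OF x] by (simp add: divide_right_mono)
  also have "\<dots> \<le> CA * (sm * DD x) / c"
    using c_pos CA_nn sigT_EE[OF x] by (intro divide_right_mono mult_left_mono) auto
  also have "\<dots> \<le> M * DD x"
    using DD_nn[of x] by (simp add: M_def algebra_simps)
  finally show "(\<integral>s. (cmod (P x s))\<^sup>2 / q s \<partial>lborel) \<le> M * DD x" .
qed

definition "Kop x = (\<lambda>s. complex_of_real al * x s - complex_of_real tau * P x s / complex_of_real (q s))"

lemma Kop_L2: "x \<in> L2 \<Longrightarrow> Kop x \<in> L2"
proof -
  assume x: "x \<in> L2"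
  have px: "P x \<in> L2" by (rule P_L2[OF x])
  have [measurable]: "P x \<in> borel_measurable lborel" "x \<in> borel_measurable lborel"
    using px x by (auto simp: L2_def)
  have bi: "integrable lborel (\<lambda>s. 2 * al\<^sup>2 * (cmod (x s))\<^sup>2 + 2 * (tau / c)\<^sup>2 * (cmod (P x s))\<^sup>2)"
    using L2_int[OF x] L2_int[OF px] by simp
  have km[measurable]: "Kop x \<in> borel_measurable lborel" unfolding Kop_def by measurable
  show ?thesis
  proof (rule L2I)
    show "Kop x \<in> borel_measurable lborel" by (rule km)
    show "integrable lborel (\<lambda>s. (cmod (Kop x s))\<^sup>2)"
    proof (rule Bochner_Integration.integrable_bound[OF bi])
      show "AE s in lborel. norm ((cmod (Kop x s))\<^sup>2) \<le> norm (2 * al\<^sup>2 * (cmod (x s))\<^sup>2 + 2 * (tau / c)\<^sup>2 * (cmod (P x s))\<^sup>2)"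
      proof
        fix s
        have "cmod (complex_of_real tau * P x s / complex_of_real (q s)) = tau * cmod (P x s) / q s"
          using tau_pos q_pos[of s] by (simp add: norm_mult norm_divide)
        also have "\<dots> \<le> tau * cmod (P x s) / c"
          using tau_pos q_pos[of s] q_ge[of s] c_pos by (intro divide_left_mono) auto
        finally have "(cmod (complex_of_real tau * P x s / complex_of_real (q s)))\<^sup>2 \<le> (tau * cmod (P x s) / c)\<^sup>2"
          by (rule power_mono) simp
        then have v: "(cmod (complex_of_real tau * P x s / complex_of_real (q s)))\<^sup>2 \<le> (tau / c)\<^sup>2 * (cmod (P x s))\<^sup>2"
          by (simp add: power_divide power_mult_distrib)
        have u: "(cmod (complex_of_real al * x s))\<^sup>2 = al\<^sup>2 * (cmod (x s))\<^sup>2"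
          by (simp add: norm_mult power_mult_distrib)
        have "(cmod (Kop x s))\<^sup>2 \<le> 2 * (cmod (complex_of_real al * x s))\<^sup>2 + 2 * (cmod (complex_of_real tau * P x s / complex_of_real (q s)))\<^sup>2"
          unfolding Kop_def by (rule cmod_diff_sq)
        also have "\<dots> \<le> 2 * al\<^sup>2 * (cmod (x s))\<^sup>2 + 2 * (tau / c)\<^sup>2 * (cmod (P x s))\<^sup>2"
          using u v by simp
        finally show "norm ((cmod (Kop x s))\<^sup>2) \<le> norm (2 * al\<^sup>2 * (cmod (x s))\<^sup>2 + 2 * (tau / c)\<^sup>2 * (cmod (P x s))\<^sup>2)"
          by simp
      qed
    qed measurable
  qed
qed

lemma Kop_contr: "x \<in> L2 \<Longrightarrow> Eq (Kop x) \<le> al\<^sup>2 * Eq x"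
proof -
  assume x: "x \<in> L2"
  have px: "P x \<in> L2" by (rule P_L2[OF x])
  have i1: "integrable lborel (\<lambda>s. al\<^sup>2 * (q s * (cmod (x s))\<^sup>2))" using Eq_int[OF x] by simp
  have i2: "integrable lborel (\<lambda>s. 2 * al * tau * Re (P x s * cnj (x s)))"
    by (intro Bochner_Integration.integrable_mult_right integrable_Re L2_prod_int[OF px x])
  have i3: "integrable lborel (\<lambda>s. tau\<^sup>2 * ((cmod (P x s))\<^sup>2 / q s))" by (intro Bochner_Integration.integrable_mult_right Pq_int[OF x])
  have "Eq (Kop x) = (\<integral>s. al\<^sup>2 * (q s * (cmod (x s))\<^sup>2) - 2 * al * tau * Re (P x s * cnj (x s))
         + tau\<^sup>2 * ((cmod (P x s))\<^sup>2 / q s) \<partial>lborel)"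
    unfolding Eq_def Kop_def
    by (rule Bochner_Integration.integral_cong[OF refl]) (rule pt_ident[OF q_pos])
  also have "\<dots> = al\<^sup>2 * Eq x - 2 * al * tau * (\<integral>s. Re (P x s * cnj (x s)) \<partial>lborel)
         + tau\<^sup>2 * (\<integral>s. (cmod (P x s))\<^sup>2 / q s \<partial>lborel)"
    unfolding Bochner_Integration.integral_add[OF Bochner_Integration.integrable_diff[OF i1 i2] i3]
      Bochner_Integration.integral_diff[OF i1 i2] Eq_def integral_mult_right_zero ..
  also have "(\<integral>s. Re (P x s * cnj (x s)) \<partial>lborel) = DD x"
    using integral_Re[OF L2_prod_int[OF px x]] P_adj[OF x] by simp
  finally have e: "Eq (Kop x) = al\<^sup>2 * Eq x - 2 * al * tau * DD x + tau\<^sup>2 * (\<integral>s. (cmod (P x s))\<^sup>2 / q s \<partial>lborel)" .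
  have "tau\<^sup>2 * (\<integral>s. (cmod (P x s))\<^sup>2 / q s \<partial>lborel) \<le> tau\<^sup>2 * (M * DD x)"
    by (intro mult_left_mono Pq_le[OF x]) simp
  moreover have "tau\<^sup>2 * (M * DD x) \<le> 2 * al * tau * DD x"
    using al_tau tau_pos M_pos DD_nn[of x] by (simp add: power2_eq_square mult_right_mono)
  ultimately show ?thesis unfolding e by linarith
qed

end

lemma cmod_add_sq: "(cmod (u + v))\<^sup>2 \<le> 2 * (cmod u)\<^sup>2 + 2 * (cmod v)\<^sup>2"
  using cmod_diff_sq[of u "-v"] by simp

context msetup begin

definition "hseq g n = (Kop ^^ n) g"
definition "divq f = (\<lambda>t. f t / complex_of_real (q t))"
definition "Binv f = (\<lambda>s. \<Sum>n. complex_of_real tau * hseq (divq f) n s)"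

lemma hseq_0: "hseq g 0 = g" and hseq_Suc: "hseq g (Suc n) = Kop (hseq g n)"
  by (simp_all add: hseq_def)

lemma hseq_L2: "g \<in> L2 \<Longrightarrow> hseq g n \<in> L2"
  by (induction n) (simp_all add: hseq_0 hseq_Suc Kop_L2)

lemma hseq_Eq: "g \<in> L2 \<Longrightarrow> Eq (hseq g n) \<le> (al\<^sup>2)^n * Eq g"
proof (induction n)
  case 0 then show ?case by (simp add: hseq_0)
next
  case (Suc n)
  have "Eq (hseq g (Suc n)) \<le> al\<^sup>2 * Eq (hseq g n)"
    unfolding hseq_Suc by (rule Kop_contr[OF hseq_L2[OF Suc.prems]])
  also have "\<dots> \<le> al\<^sup>2 * ((al\<^sup>2)^n * Eq g)" by (intro mult_left_mono Suc.IH Suc.prems) simp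
  finally show ?case by (simp add: mult.assoc)
qed

lemma hseq_EE: "g \<in> L2 \<Longrightarrow> EE (hseq g n) \<le> (Eq g / c) * (al\<^sup>2)^n"
proof -
  assume g: "g \<in> L2"
  have "c * EE (hseq g n) \<le> (al\<^sup>2)^n * Eq g"
    using Eq_ge[OF hseq_L2[OF g]] hseq_Eq[OF g] by (rule order_trans)
  then show ?thesis using c_pos by (simp add: field_simps)
qed

lemma scaled_L2: "x \<in> L2 \<Longrightarrow> (\<lambda>s. complex_of_real a * x s) \<in> L2"
  and scaled_EE: "EE (\<lambda>s. complex_of_real a * x s) = a\<^sup>2 * EE x"
proof -
  show "EE (\<lambda>s. complex_of_real a * x s) = a\<^sup>2 * EE x"
    by (simp add: EE_def norm_mult power_mult_distrib)
  assume x: "x \<in> L2"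
  have [measurable]: "x \<in> borel_measurable lborel" using x by (simp add: L2_def)
  show "(\<lambda>s. complex_of_real a * x s) \<in> L2"
    by (rule L2I) (use L2_int[OF x] in \<open>simp_all add: norm_mult power_mult_distrib\<close>)
qed

lemma divq_L2: "f \<in> L2 \<Longrightarrow> divq f \<in> L2" and divq_EE: "f \<in> L2 \<Longrightarrow> EE (divq f) \<le> EE f / c\<^sup>2"
proof -
  assume f: "f \<in> L2"
  have [measurable]: "f \<in> borel_measurable lborel" using f by (simp add: L2_def)
  have le: "(cmod (divq f s))\<^sup>2 \<le> (cmod (f s))\<^sup>2 / c\<^sup>2" for s
  proof -
    have "cmod (divq f s) = cmod (f s) / q s" using q_pos[of s] by (simp add: divq_def norm_divide)
    also have "\<dots> \<le> cmod (f s) / c" using q_ge[of s] c_pos by (intro divide_left_mono) auto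
    finally have "(cmod (divq f s))\<^sup>2 \<le> (cmod (f s) / c)\<^sup>2" by (rule power_mono) simp
    then show ?thesis by (simp add: power_divide)
  qed
  have bi: "integrable lborel (\<lambda>s. (cmod (f s))\<^sup>2 / c\<^sup>2)" using L2_int[OF f] by simp
  have i: "integrable lborel (\<lambda>s. (cmod (divq f s))\<^sup>2)"
    by (rule Bochner_Integration.integrable_bound[OF bi]) (use le in \<open>auto simp: divq_def\<close>)
  show "divq f \<in> L2" by (rule L2I[OF _ i]) (simp add: divq_def)
  have "EE (divq f) \<le> (\<integral>s. (cmod (f s))\<^sup>2 / c\<^sup>2 \<partial>lborel)" unfolding EE_def
    by (rule Bochner_Integration.integral_mono[OF i bi le])
  then show "EE (divq f) \<le> EE f / c\<^sup>2" by (simp add: EE_def)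
qed

definition "CB = tau\<^sup>2 * ((c + 1) / c\<^sup>2 / c) / (1 - al)\<^sup>2"

lemma Binv_L2: "f \<in> L2 \<Longrightarrow> Binv f \<in> L2" and Binv_EE: "f \<in> L2 \<Longrightarrow> EE (Binv f) \<le> CB * EE f"
  and Binv_AE: "f \<in> L2 \<Longrightarrow> AE t in lborel. summable (\<lambda>n. cmod (complex_of_real tau * hseq (divq f) n t))"
proof -
  assume f: "f \<in> L2"
  define g where "g = divq f"
  have g: "g \<in> L2" unfolding g_def by (rule divq_L2[OF f])
  define xs where "xs n = (\<lambda>s. complex_of_real tau * hseq g n s)" for n
  have xs: "xs n \<in> L2" for n unfolding xs_def by (rule scaled_L2[OF hseq_L2[OF g]])
  have xE: "EE (xs n) \<le> (tau\<^sup>2 * (Eq g / c)) * (al\<^sup>2)^n" for n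
    unfolding xs_def scaled_EE mult.assoc by (rule mult_left_mono[OF hseq_EE[OF g]]) simp
  have r: "0 < al\<^sup>2" "al\<^sup>2 < 1" using al_pos al_lt by (auto simp: power_less_one_iff)
  note S = series_L2[OF xs xE r]
  have sq: "sqrt (al\<^sup>2) = al" using al_pos by simp
  show "Binv f \<in> L2" using S(2) by (simp add: Binv_def xs_def g_def)
  show "AE t in lborel. summable (\<lambda>n. cmod (complex_of_real tau * hseq (divq f) n t))"
    using S(1) by (simp add: xs_def g_def)
  have "EE (Binv f) \<le> tau\<^sup>2 * (Eq g / c) / (1 - al)\<^sup>2"
    using S(3) by (simp add: Binv_def xs_def g_def abs_of_pos[OF al_pos])
  also have "\<dots> \<le> tau\<^sup>2 * ((c + 1) * (EE f / c\<^sup>2) / c) / (1 - al)\<^sup>2"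
  proof -
    have "Eq g \<le> (c + 1) * EE g" by (rule Eq_le[OF g])
    also have "\<dots> \<le> (c + 1) * (EE f / c\<^sup>2)" using c_pos divq_EE[OF f] by (intro mult_left_mono) (auto simp: g_def)
    finally have "Eq g / c \<le> (c + 1) * (EE f / c\<^sup>2) / c" using c_pos by (rule divide_right_mono[OF _ less_imp_le])
    then have "tau\<^sup>2 * (Eq g / c) \<le> tau\<^sup>2 * ((c + 1) * (EE f / c\<^sup>2) / c)"
      by (rule mult_left_mono) simp
    then show ?thesis by (rule divide_right_mono) simp
  qed
  also have "\<dots> = CB * EE f" by (simp add: CB_def field_simps)
  finally show "EE (Binv f) \<le> CB * EE f" .
qed

lemma opA_eq: "op_A \<kappa>t \<kappa> \<epsilon> f s = complex_of_real (q s) * f s + P f s"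
proof -
  have fe: "(\<lambda>t. complex_of_real (1 / \<kappa>) * resolvent3 \<kappa> \<epsilon> (T2 \<epsilon> f) t)
      = (\<lambda>t. complex_of_real (sig t) * T2 \<epsilon> f t)"
    by (rule ext) (simp add: resolvent3_def mult_op_def sig_def)
  have e1: "complex_of_real (1 / \<kappa>) * T2_adj \<epsilon> (resolvent3 \<kappa> \<epsilon> (T2 \<epsilon> f)) s = P f s"
    unfolding T2adj_is KA.op_scale[symmetric] fe P_def ..
  show ?thesis
    unfolding op_A_def e1 by (simp add: T0_def mult_op_def q_def c_def distrib_right)
qed

lemma opA_fun: "op_A \<kappa>t \<kappa> \<epsilon> f = (\<lambda>s. complex_of_real (q s) * f s + P f s)"
  by (rule ext) (rule opA_eq)

definition "CO = 2 * (c + 1)\<^sup>2 + 2 * (CA * (sm\<^sup>2 * CT))"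

lemma opA_L2: "f \<in> L2 \<Longrightarrow> op_A \<kappa>t \<kappa> \<epsilon> f \<in> L2" and opA_EE: "f \<in> L2 \<Longrightarrow> EE (op_A \<kappa>t \<kappa> \<epsilon> f) \<le> CO * EE f"
proof -
  assume f: "f \<in> L2"
  have pf: "P f \<in> L2" by (rule P_L2[OF f])
  have [measurable]: "f \<in> borel_measurable lborel" "P f \<in> borel_measurable lborel"
    using f pf by (auto simp: L2_def)
  have le: "(cmod (complex_of_real (q s) * f s + P f s))\<^sup>2 \<le> 2 * (c + 1)\<^sup>2 * (cmod (f s))\<^sup>2 + 2 * (cmod (P f s))\<^sup>2" for s
  proof -
    have "(cmod (complex_of_real (q s) * f s))\<^sup>2 = (q s)\<^sup>2 * (cmod (f s))\<^sup>2"
      using q_pos[of s] by (simp add: norm_mult power_mult_distrib)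
    also have "\<dots> \<le> (c + 1)\<^sup>2 * (cmod (f s))\<^sup>2"
      using q_pos[of s] q_le[of s] by (intro mult_right_mono power_mono) auto
    finally have "(cmod (complex_of_real (q s) * f s))\<^sup>2 \<le> (c + 1)\<^sup>2 * (cmod (f s))\<^sup>2" .
    then show ?thesis using cmod_add_sq[of "complex_of_real (q s) * f s" "P f s"] by simp
  qed
  have bi: "integrable lborel (\<lambda>s. 2 * (c + 1)\<^sup>2 * (cmod (f s))\<^sup>2 + 2 * (cmod (P f s))\<^sup>2)"
    using L2_int[OF f] L2_int[OF pf] by simp
  have i: "integrable lborel (\<lambda>s. (cmod (complex_of_real (q s) * f s + P f s))\<^sup>2)"
    by (rule Bochner_Integration.integrable_bound[OF bi]) (use le in auto)
  show "op_A \<kappa>t \<kappa> \<epsilon> f \<in> L2" unfolding opA_fun by (rule L2I[OF _ i]) measurable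
  have "EE (op_A \<kappa>t \<kappa> \<epsilon> f) \<le> (\<integral>s. 2 * (c + 1)\<^sup>2 * (cmod (f s))\<^sup>2 + 2 * (cmod (P f s))\<^sup>2 \<partial>lborel)"
    unfolding opA_fun EE_def by (rule Bochner_Integration.integral_mono[OF i bi le])
  also have "\<dots> = 2 * (c + 1)\<^sup>2 * EE f + 2 * EE (P f)"
    using L2_int[OF f] L2_int[OF pf] by (simp add: EE_def)
  also have "\<dots> \<le> 2 * (c + 1)\<^sup>2 * EE f + 2 * (CA * (sm\<^sup>2 * CT) * EE f)"
    using P_EE2[OF f] by simp
  also have "\<dots> = CO * EE f" by (simp add: CO_def algebra_simps)
  finally show "EE (op_A \<kappa>t \<kappa> \<epsilon> f) \<le> CO * EE f" .
qed

lemma T2_scale: "T2 \<epsilon> (\<lambda>s. complex_of_real a * x s) = (\<lambda>t. complex_of_real a * T2 \<epsilon> x t)"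
  unfolding T2_is by (rule ext) (rule K2.op_scale)

lemma P_scale: "P (\<lambda>s. complex_of_real a * x s) = (\<lambda>s. complex_of_real a * P x s)"
proof -
  have "(\<lambda>t. complex_of_real (sig t) * T2 \<epsilon> (\<lambda>s. complex_of_real a * x s) t)
      = (\<lambda>t. complex_of_real a * (complex_of_real (sig t) * T2 \<epsilon> x t))"
    unfolding T2_scale by (auto simp: ac_simps)
  then show ?thesis unfolding P_def T2adj_is by (auto intro!: ext KA.op_scale)
qed

lemma P_diff: "x \<in> L2 \<Longrightarrow> y \<in> L2 \<Longrightarrow> P (\<lambda>s. x s - y s) = (\<lambda>s. P x s - P y s)"
proof -
  assume x: "x \<in> L2" and y: "y \<in> L2"
  have "(\<lambda>t. complex_of_real (sig t) * T2 \<epsilon> (\<lambda>s. x s - y s) t) = (\<lambda>t. sigT x t - sigT y t)"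
    unfolding T2_is sigT_def by (auto simp: K2.op_diff[OF x y] algebra_simps)
  then show ?thesis unfolding P_def T2adj_is
    using KA.op_diff[OF sigT_L2'[OF x] sigT_L2'[OF y]] by (auto simp: sigT_def)
qed

end

context msetup begin

lemma step_ident:
  "complex_of_real (q s) * (complex_of_real tau * h s) + complex_of_real tau * P h s
   = complex_of_real (q s) * (h s - Kop h s)"
proof -
  have qn: "complex_of_real (q s) \<noteq> 0" using q_pos[of s] by simp
  show ?thesis unfolding Kop_def al_eq using qn by (simp add: field_simps)
qed

lemma right_inv: "f \<in> L2 \<Longrightarrow> AE s in lborel. op_A \<kappa>t \<kappa> \<epsilon> (Binv f) s = f s"
proof -
  assume f: "f \<in> L2"
  define g where "g = divq f"
  have g: "g \<in> L2" unfolding g_def by (rule divq_L2[OF f])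
  define h where "h = hseq g"
  define xs where "xs n = (\<lambda>s. complex_of_real tau * h n s)" for n
  have xs: "xs n \<in> L2" for n unfolding xs_def h_def by (rule scaled_L2[OF hseq_L2[OF g]])
  define C0 where "C0 = tau\<^sup>2 * (Eq g / c)"
  have xE: "EE (xs n) \<le> C0 * (al\<^sup>2)^n" for n
    unfolding xs_def scaled_EE C0_def mult.assoc h_def by (rule mult_left_mono[OF hseq_EE[OF g]]) simp
  have r: "0 < al\<^sup>2" "al\<^sup>2 < 1" using al_pos al_lt by (auto simp: power_less_one_iff)
  note S = series_L2[OF xs xE r]
  define u where "u = (\<lambda>s. \<Sum>n. xs n s)"
  have uB: "Binv f = u" unfolding u_def Binv_def xs_def h_def g_def ..
  have u: "u \<in> L2" using S(2) by (simp add: u_def)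
  have um[measurable]: "u \<in> borel_measurable lborel" using u by (simp add: L2_def)
  have uAE: "AE t in lborel. u t = (\<Sum>n. xs n t)" by (simp add: u_def)
  note T = K2.op_suminf[OF xs xE less_imp_le[OF r(1)] r(2) S(1) um uAE]
  define ys where "ys n = sigT (xs n)" for n
  have ys: "ys n \<in> L2" for n unfolding ys_def by (rule sigT_L2'[OF xs])
  have yE: "EE (ys n) \<le> (sm\<^sup>2 * CT * C0) * (al\<^sup>2)^n" for n
  proof -
    have "EE (ys n) \<le> sm\<^sup>2 * CT * EE (xs n)" unfolding ys_def by (rule sigT_EE2[OF xs])
    also have "\<dots> \<le> sm\<^sup>2 * CT * (C0 * (al\<^sup>2)^n)" by (intro mult_left_mono xE) (use CT_nn in simp)
    finally show ?thesis by (simp add: mult.assoc)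
  qed
  have ysum: "sigT u t = (\<Sum>n. ys n t)" for t
  proof -
    have "summable (\<lambda>n. int_op (T2_kernel \<epsilon>) (xs n) t)" by (rule summable_norm_cancel[OF T(1)])
    then show ?thesis unfolding sigT_def ys_def T2_is T(2) by (rule suminf_mult[symmetric])
  qed
  have ysm: "AE t in lborel. summable (\<lambda>n. cmod (ys n t))"
  proof
    fix t
    have "summable (\<lambda>n. sig t * cmod (int_op (T2_kernel \<epsilon>) (xs n) t))" by (rule summable_mult[OF T(1)])
    then show "summable (\<lambda>n. cmod (ys n t))"
      using sig_pos[of t] by (simp add: ys_def sigT_def T2_is norm_mult abs_of_pos)
  qed
  have sum_meas[measurable]: "sigT u \<in> borel_measurable lborel" using sigT_L2'[OF u] by (simp add: L2_def)
  note PS = KA.op_suminf[OF ys yE less_imp_le[OF r(1)] r(2) ysm sum_meas AE_I2[OF ysum]]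
  have Pu: "P u s = (\<Sum>n. P (xs n) s)" for s unfolding P_is T2adj_is PS(2) ys_def ..
  have Psm: "summable (\<lambda>n. P (xs n) s)" for s
    using summable_norm_cancel[OF PS(1)] unfolding P_is T2adj_is ys_def .
  show ?thesis
    using S(1)
  proof eventually_elim
    case (elim s)
    have xsum: "summable (\<lambda>n. xs n s)" by (rule summable_norm_cancel[OF elim])
    have lim: "(\<lambda>n. h n s) \<longlonglongrightarrow> 0"
    proof -
      have "(\<lambda>n. xs n s) \<longlonglongrightarrow> 0" by (rule summable_LIMSEQ_zero[OF xsum])
      then have "(\<lambda>n. complex_of_real (1 / tau) * xs n s) \<longlonglongrightarrow> 0" by (rule tendsto_mult_right_zero)
      moreover have "complex_of_real (1 / tau) * xs n s = h n s" for n using tau_pos by (simp add: xs_def)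
      ultimately show ?thesis by simp
    qed
    have tel: "(\<lambda>n. complex_of_real (q s) * (h n s - h (Suc n) s)) sums (complex_of_real (q s) * (h 0 s - 0))"
      by (rule sums_mult[OF telescope_sums'[OF lim]])
    have pt: "complex_of_real (q s) * xs n s + P (xs n) s = complex_of_real (q s) * (h n s - h (Suc n) s)" for n
      unfolding xs_def P_scale h_def hseq_Suc by (rule step_ident)
    have "op_A \<kappa>t \<kappa> \<epsilon> (Binv f) s = complex_of_real (q s) * (\<Sum>n. xs n s) + (\<Sum>n. P (xs n) s)"
      unfolding uB opA_eq Pu by (simp add: u_def)
    also have "\<dots> = (\<Sum>n. complex_of_real (q s) * xs n s) + (\<Sum>n. P (xs n) s)"
      by (simp add: suminf_mult[OF xsum])
    also have "\<dots> = (\<Sum>n. complex_of_real (q s) * xs n s + P (xs n) s)"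
      by (rule suminf_add[OF summable_mult[OF xsum] Psm])
    also have "\<dots> = (\<Sum>n. complex_of_real (q s) * (h n s - h (Suc n) s))" unfolding pt ..
    also have "\<dots> = complex_of_real (q s) * (h 0 s - 0)" by (rule sums_unique[OF tel, symmetric])
    also have "\<dots> = f s" using q_pos[of s] by (simp add: h_def hseq_0 g_def divq_def)
    finally show ?case .
  qed
qed

end

lemma bounded_L2I:
  assumes "\<And>f. f \<in> L2 \<Longrightarrow> A f \<in> L2" and "\<And>f. f \<in> L2 \<Longrightarrow> EE (A f) \<le> K * EE f" and "0 \<le> K"
  shows "bounded_on_L2 A"
  unfolding bounded_on_L2_def
proof (intro conjI ballI exI)
  fix f assume f: "f \<in> L2"
  show "A f \<in> L2" by (rule assms(1)[OF f])
  have "L2norm (A f) = sqrt (EE (A f))" by (simp add: L2norm_def EE_def)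
  also have "\<dots> \<le> sqrt (K * EE f)" using assms(2)[OF f] by simp
  also have "\<dots> = sqrt K * L2norm f" by (simp add: L2norm_def EE_def real_sqrt_mult)
  finally show "L2norm (A f) \<le> sqrt K * L2norm f" .
qed

context msetup begin

lemma left_inv: "f \<in> L2 \<Longrightarrow> AE s in lborel. Binv (op_A \<kappa>t \<kappa> \<epsilon> f) s = f s"
proof -
  assume f: "f \<in> L2"
  define a where "a = hseq f"
  have aL: "a n \<in> L2" for n unfolding a_def by (rule hseq_L2[OF f])
  have aE: "EE (a n) \<le> (Eq f / c) * (al\<^sup>2)^n" for n unfolding a_def by (rule hseq_EE[OF f])
  have r: "0 < al\<^sup>2" "al\<^sup>2 < 1" using al_pos al_lt by (auto simp: power_less_one_iff)
  note S = series_L2[OF aL aE r]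
  have tn: "complex_of_real tau \<noteq> 0" using tau_pos by simp
  have claim: "hseq (divq (op_A \<kappa>t \<kappa> \<epsilon> f)) n = (\<lambda>s. complex_of_real (1 / tau) * (a n s - a (Suc n) s))" for n
  proof (induction n)
    case 0
    show ?case
    proof (rule ext)
      fix s
      have qn: "complex_of_real (q s) \<noteq> 0" using q_pos[of s] by simp
      show "hseq (divq (op_A \<kappa>t \<kappa> \<epsilon> f)) 0 s = complex_of_real (1 / tau) * (a 0 s - a (Suc 0) s)"
        unfolding hseq_0 a_def hseq_Suc divq_def opA_eq Kop_def al_eq
        using qn tn by (simp add: field_simps)
    qed
  next
    case (Suc n)
    have Pz: "P (\<lambda>s. complex_of_real (1 / tau) * (a n s - a (Suc n) s))
        = (\<lambda>s. complex_of_real (1 / tau) * (P (a n) s - P (a (Suc n)) s))"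
      unfolding P_scale P_diff[OF aL aL] ..
    show ?case
    proof (rule ext)
      fix s
      have qn: "complex_of_real (q s) \<noteq> 0" using q_pos[of s] by simp
      have L: "Kop (\<lambda>s. complex_of_real (1 / tau) * (a n s - a (Suc n) s)) s
          = complex_of_real al * (complex_of_real (1 / tau) * (a n s - a (Suc n) s))
            - complex_of_real tau * (complex_of_real (1 / tau) * (P (a n) s - P (a (Suc n)) s)) / complex_of_real (q s)"
        unfolding Kop_def Pz ..
      have A1: "a (Suc n) s = complex_of_real al * a n s - complex_of_real tau * P (a n) s / complex_of_real (q s)"
        by (simp add: a_def hseq_Suc Kop_def)
      have A2: "a (Suc (Suc n)) s = complex_of_real al * a (Suc n) s - complex_of_real tau * P (a (Suc n)) s / complex_of_real (q s)"
        by (simp add: a_def hseq_Suc Kop_def)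
      show "hseq (divq (op_A \<kappa>t \<kappa> \<epsilon> f)) (Suc n) s = complex_of_real (1 / tau) * (a (Suc n) s - a (Suc (Suc n)) s)"
        unfolding hseq_Suc Suc.IH L A2 A1
        using qn tn by (simp add: al_eq field_simps)
    qed
  qed
  show ?thesis
    using S(1)
  proof eventually_elim
    case (elim s)
    have lim: "(\<lambda>n. a n s) \<longlonglongrightarrow> 0" by (rule summable_LIMSEQ_zero[OF summable_norm_cancel[OF elim]])
    have tel: "(\<lambda>n. a n s - a (Suc n) s) sums (a 0 s - 0)" by (rule telescope_sums'[OF lim])
    have "Binv (op_A \<kappa>t \<kappa> \<epsilon> f) s = (\<Sum>n. a n s - a (Suc n) s)"
      unfolding Binv_def claim using tau_pos by simp
    also have "\<dots> = a 0 s - 0" by (rule sums_unique[OF tel, symmetric])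
    also have "\<dots> = f s" by (simp add: a_def hseq_0)
    finally show ?case .
  qed
qed

lemma CO_nn: "0 \<le> CO" using CA_nn CT_nn by (simp add: CO_def)
lemma CB_nn: "0 \<le> CB" using c_pos by (simp add: CB_def)

lemma main: "boundedly_invertible_L2 (op_A \<kappa>t \<kappa> \<epsilon>)"
  unfolding boundedly_invertible_L2_def
proof (intro conjI exI ballI)
  show "bounded_on_L2 (op_A \<kappa>t \<kappa> \<epsilon>)" by (rule bounded_L2I[OF opA_L2 opA_EE CO_nn])
  show "bounded_on_L2 Binv" by (rule bounded_L2I[OF Binv_L2 Binv_EE CB_nn])
  fix f assume f: "f \<in> L2"
  show "AE s in lborel. op_A \<kappa>t \<kappa> \<epsilon> (Binv f) s = f s" by (rule right_inv[OF f])
  show "AE s in lborel. Binv (op_A \<kappa>t \<kappa> \<epsilon> f) s = f s" by (rule left_inv[OF f])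
qed

end

theorem lemma5:
  fixes \<kappa>t \<kappa> \<epsilon> :: real
  assumes "\<kappa>t > 0" and "\<kappa> \<ge> 1 / sqrt 2" and "\<epsilon> > 1"
  shows "boundedly_invertible_L2 (op_A \<kappa>t \<kappa> \<epsilon>)"
proof -
  interpret msetup \<kappa>t \<kappa> \<epsilon> by unfold_locales (use assms in auto)
  show ?thesis by (rule main)
qed


end
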